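(* Let $\psi:C_Z\to\mathbb{R}$ be an increasing convex functional. Then: (i) there exists an increasing convex function $\varphi:\mathbb{R}_+\to\mathbb{R}\cup\{+\infty\}$ with $\lim_{x\to+\infty}\varphi(x)/x=+\infty$ such that $\psi^*_{C_Z}(\mu)\ge\varphi(\langle Z,\mu\rangle)$ for all $\mu\in ca^+_Z$; (ii) if $\lim_{z\to+\infty}\psi(n(Z-z)^+)=\psi(0)$ for every $n\in\mathbb{N}$, then for every $a\in\mathbb{R}$ the sublevel set $\{\mu\in ca^+_Z:\psi^*_{C_Z}(\mu)\le a\}$ is $\sigma(ca^+_Z,C_Z)$-compact.
   Context: Fix integers $J\ge0$, $T\ge1$. $\Omega$ is a non-empty subset of $((0,\infty)\times\mathbb{R}^J)^T$ with the Euclidean metric. $Z:\Omega\to[1,\infty)$ is continuous with $\{\omega\in\Omega:Z(\omega)\le z\}$ compact for every $z\in\mathbb{R}_+$. $C_Z$ is the space of continuous $X:\Omega\to\mathbb{R}$ with $X/Z$ bounded. $ca^+_Z$ is the set of (nonnegative) Borel measures $\mu$ on $\Omega$ with $\langle Z,\mu\rangle:=\int Z\,d\mu<\infty$; $\langle X,\mu\rangle=\int X\,d\mu$. $\sigma(ca^+_Z,C_Z)$ is the coarsest topology on $ca^+_Z$ making $\mu\mapsto\langle X,\mu\rangle$ continuous for all $X\in C_Z$. Increasing means $f(x)\ge f(y)$ whenever $x\ge y$. $\psi^*_{C_Z}(\mu)=\sup_{X\in C_Z}(\langle X,\mu\rangle-\psi(X))$. *)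

theory Defs
  imports "HOL-Analysis.Analysis"
begin

text \<open>The underlying space: points of ((0,oo) x R^J)^T are represented as elements of
  type (real^'k)^'t where CARD('t) = T, CARD('k) = J+1 and a distinguished index k0 :: 'k
  marks the coordinate that must be strictly positive.\<close>

definition state_space :: "'k \<Rightarrow> ((real^'k::finite)^'t::finite) set" where
  "state_space k0 = {x. \<forall>t. x $ t $ k0 > 0}"

definition CZ :: "'a::topological_space set \<Rightarrow> ('a \<Rightarrow> real) \<Rightarrow> ('a \<Rightarrow> real) set" where
  "CZ \<Omega> Z = {X. continuous_on \<Omega> X \<and> (\<exists>c. \<forall>\<omega>\<in>\<Omega>. \<bar>X \<omega> / Z \<omega>\<bar> \<le> c)}"

definition caZ :: "'a::topological_space set \<Rightarrow> ('a \<Rightarrow> real) \<Rightarrow> 'a measure set" where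
  "caZ \<Omega> Z = {\<mu>. space \<mu> = \<Omega> \<and> sets \<mu> = sets (restrict_space borel \<Omega>)
                  \<and> (\<integral>\<^sup>+ \<omega>. ennreal (Z \<omega>) \<partial>\<mu>) < \<infinity>}"

definition pairing :: "('a \<Rightarrow> real) \<Rightarrow> 'a measure \<Rightarrow> real" where
  "pairing X \<mu> = (\<integral>\<omega>. X \<omega> \<partial>\<mu>)"

definition weak_topology_caZ :: "'a::topological_space set \<Rightarrow> ('a \<Rightarrow> real) \<Rightarrow> 'a measure topology" where
  "weak_topology_caZ \<Omega> Z = topology_generated_by
     {{\<mu> \<in> caZ \<Omega> Z. pairing X \<mu> \<in> U} | X U. X \<in> CZ \<Omega> Z \<and> open U}"

definition conj_CZ :: "'a::topological_space set \<Rightarrow> ('a \<Rightarrow> real) \<Rightarrow> (('a \<Rightarrow> real) \<Rightarrow> real)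
                          \<Rightarrow> 'a measure \<Rightarrow> ereal" where
  "conj_CZ \<Omega> Z \<psi> \<mu> = (SUP X\<in>CZ \<Omega> Z. ereal (pairing X \<mu> - \<psi> X))"

definition increasing_on_CZ :: "'a::topological_space set \<Rightarrow> ('a \<Rightarrow> real) \<Rightarrow> (('a \<Rightarrow> real) \<Rightarrow> real) \<Rightarrow> bool" where
  "increasing_on_CZ \<Omega> Z \<psi> \<longleftrightarrow>
     (\<forall>X\<in>CZ \<Omega> Z. \<forall>Y\<in>CZ \<Omega> Z. (\<forall>\<omega>\<in>\<Omega>. Y \<omega> \<le> X \<omega>) \<longrightarrow> \<psi> Y \<le> \<psi> X)"

definition convex_on_CZ :: "'a::topological_space set \<Rightarrow> ('a \<Rightarrow> real) \<Rightarrow> (('a \<Rightarrow> real) \<Rightarrow> real) \<Rightarrow> bool" where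
  "convex_on_CZ \<Omega> Z \<psi> \<longleftrightarrow>
     (\<forall>X\<in>CZ \<Omega> Z. \<forall>Y\<in>CZ \<Omega> Z. \<forall>u::real. 0 \<le> u \<and> u \<le> 1 \<longrightarrow>
        \<psi> (\<lambda>\<omega>. (1 - u) * X \<omega> + u * Y \<omega>) \<le> (1 - u) * \<psi> X + u * \<psi> Y)"

text \<open>Convexity of an extended-real-valued function on a set of reals
  (with the convention 0 * oo = 0).\<close>
definition ereal_convex_on :: "real set \<Rightarrow> (real \<Rightarrow> ereal) \<Rightarrow> bool" where
  "ereal_convex_on S \<phi> \<longleftrightarrow>
     (\<forall>x\<in>S. \<forall>y\<in>S. \<forall>u::real. 0 \<le> u \<and> u \<le> 1 \<longrightarrow>
        \<phi> ((1 - u) * x + u * y) \<le> ereal (1 - u) * \<phi> x + ereal u * \<phi> y)"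

end

theory Submission
  imports Defs
begin


lemma CZ_scaled_Z:
  assumes "continuous_on \<Omega> Z" "\<forall>\<omega>\<in>\<Omega>. 1 \<le> Z \<omega>"
  shows "(\<lambda>\<omega>. c * Z \<omega>) \<in> CZ \<Omega> Z"
  unfolding CZ_def
proof (intro CollectI conjI exI)
  show "continuous_on \<Omega> (\<lambda>\<omega>. c * Z \<omega>)" using assms(1) by (intro continuous_intros)
  show "\<forall>\<omega>\<in>\<Omega>. \<bar>c * Z \<omega> / Z \<omega>\<bar> \<le> \<bar>c\<bar>" using assms(2) by auto
qed

lemma part1:
  fixes \<Omega> :: "'a::topological_space set" and Z :: "'a \<Rightarrow> real"
  assumes Z_ge1: "\<forall>\<omega>\<in>\<Omega>. 1 \<le> Z \<omega>"
    and Z_cont: "continuous_on \<Omega> Z"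
  shows "\<exists>\<phi> :: real \<Rightarrow> ereal.
            (\<forall>x\<ge>0. \<phi> x \<noteq> -\<infinity>)
          \<and> mono_on {0..} \<phi>
          \<and> ereal_convex_on {0..} \<phi>
          \<and> ((\<lambda>x. \<phi> x / ereal x) \<longlongrightarrow> \<infinity>) at_top
          \<and> (\<forall>\<mu>\<in>caZ \<Omega> Z. conj_CZ \<Omega> Z \<psi> \<mu> \<ge> \<phi> (pairing Z \<mu>))"
proof -
  define p where "p n = \<psi> (\<lambda>\<omega>. real n * Z \<omega>)" for n :: nat
  define \<phi> where "\<phi> x = (SUP n. ereal (real n * x - p n))" for x
  have lower: "ereal (real n * x - p n) \<le> \<phi> x" for n x
    unfolding \<phi>_def by (rule SUP_upper) auto
  have "\<phi> x \<noteq> -\<infinity>" for x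
    using lower[of 0 x] by auto
  moreover have "mono_on {0..} \<phi>"
  proof (rule mono_onI)
    fix x y :: real assume "x \<in> {0..}" "y \<in> {0..}" "x \<le> y"
    then show "\<phi> x \<le> \<phi> y" unfolding \<phi>_def
      by (intro SUP_mono) (metis UNIV_I diff_right_mono mult_left_mono of_nat_0_le_iff ereal_less_eq(3))
  qed
  moreover have "ereal_convex_on {0..} \<phi>"
    unfolding ereal_convex_on_def
  proof (intro ballI allI impI)
    fix x y u :: real assume u: "0 \<le> u \<and> u \<le> 1"
    show "\<phi> ((1 - u) * x + u * y) \<le> ereal (1 - u) * \<phi> x + ereal u * \<phi> y"
      unfolding \<phi>_def[of "(1 - u) * x + u * y"]
    proof (rule SUP_least)
      fix n assume "n \<in> (UNIV :: nat set)"
      have "ereal (real n * ((1 - u) * x + u * y) - p n)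
            = ereal (1 - u) * ereal (real n * x - p n) + ereal u * ereal (real n * y - p n)"
        by (simp add: algebra_simps)
      also have "\<dots> \<le> ereal (1 - u) * \<phi> x + ereal u * \<phi> y"
        using u by (intro add_mono ereal_mult_left_mono lower) auto
      finally show "ereal (real n * ((1 - u) * x + u * y) - p n) \<le> ereal (1 - u) * \<phi> x + ereal u * \<phi> y" .
    qed
  qed
  moreover have "((\<lambda>x. \<phi> x / ereal x) \<longlongrightarrow> \<infinity>) at_top"
    unfolding tendsto_PInfty
  proof
    fix r :: real
    obtain n :: nat where n: "r + 1 < real n" using reals_Archimedean2 by blast
    have "eventually (\<lambda>x. x > max 1 \<bar>p n\<bar>) at_top" by (rule eventually_gt_at_top)
    then show "eventually (\<lambda>x. ereal r < \<phi> x / ereal x) at_top"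
    proof eventually_elim
      case (elim x)
      then have x: "x > 0" "x > \<bar>p n\<bar>" by auto
      have "p n / x < 1" using x by (simp add: divide_less_eq)
      moreover have "(real n * x - p n) / x = real n - p n / x" using x by (simp add: diff_divide_distrib)
      ultimately have "r < (real n * x - p n) / x" using n by linarith
      also have "ereal ((real n * x - p n) / x) = ereal (real n * x - p n) / ereal x"
        using x by simp
      also have "\<dots> \<le> \<phi> x / ereal x"
        using x by (intro ereal_divide_right_mono lower) auto
      finally show ?case by simp
    qed
  qed
  moreover have "\<forall>\<mu>\<in>caZ \<Omega> Z. conj_CZ \<Omega> Z \<psi> \<mu> \<ge> \<phi> (pairing Z \<mu>)"
  proof
    fix \<mu> assume "\<mu> \<in> caZ \<Omega> Z"
    show "\<phi> (pairing Z \<mu>) \<le> conj_CZ \<Omega> Z \<psi> \<mu>"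
      unfolding \<phi>_def
    proof (rule SUP_least)
      fix n :: nat assume "n \<in> UNIV"
      have "ereal (real n * pairing Z \<mu> - p n) = ereal (pairing (\<lambda>\<omega>. real n * Z \<omega>) \<mu> - \<psi> (\<lambda>\<omega>. real n * Z \<omega>))"
        by (simp add: pairing_def p_def)
      also have "\<dots> \<le> conj_CZ \<Omega> Z \<psi> \<mu>"
        unfolding conj_CZ_def by (rule SUP_upper) (rule CZ_scaled_Z[OF Z_cont Z_ge1])
      finally show "ereal (real n * pairing Z \<mu> - p n) \<le> conj_CZ \<Omega> Z \<psi> \<mu>" .
    qed
  qed
  ultimately show ?thesis by blast
qed


lemma caZ_meas:
  assumes "\<mu> \<in> caZ \<Omega> Z" "continuous_on \<Omega> X"
  shows "X \<in> borel_measurable \<mu>"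
proof -
  have "sets \<mu> = sets (restrict_space borel \<Omega>)" using assms(1) by (simp add: caZ_def)
  then show ?thesis using borel_measurable_continuous_on_restrict[OF assms(2)]
    using measurable_cong_sets by blast
qed

lemma caZ_integrable_Z:
  assumes "\<mu> \<in> caZ \<Omega> Z" "continuous_on \<Omega> Z" "\<forall>\<omega>\<in>\<Omega>. 1 \<le> Z \<omega>"
  shows "integrable \<mu> Z"
proof (rule integrableI_nonneg)
  show "Z \<in> borel_measurable \<mu>" by (rule caZ_meas[OF assms(1,2)])
  have "space \<mu> = \<Omega>" using assms(1) by (simp add: caZ_def)
  then show "AE x in \<mu>. 0 \<le> Z x" using assms(3) by (intro AE_I2) force
  show "(\<integral>\<^sup>+ x. ennreal (Z x) \<partial>\<mu>) < \<infinity>" using assms(1) by (simp add: caZ_def)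
qed

lemma CZ_bound:
  assumes "X \<in> CZ \<Omega> Z" "\<forall>\<omega>\<in>\<Omega>. 1 \<le> Z \<omega>"
  obtains c where "c \<ge> 0" "\<forall>\<omega>\<in>\<Omega>. \<bar>X \<omega>\<bar> \<le> c * Z \<omega>"
proof -
  obtain c where c: "\<forall>\<omega>\<in>\<Omega>. \<bar>X \<omega> / Z \<omega>\<bar> \<le> c" using assms(1) by (auto simp: CZ_def)
  have "\<forall>\<omega>\<in>\<Omega>. \<bar>X \<omega>\<bar> \<le> \<bar>c\<bar> * Z \<omega>"
  proof
    fix \<omega> assume w: "\<omega> \<in> \<Omega>"
    then have Z: "Z \<omega> > 0" using assms(2) by force
    have "\<bar>X \<omega>\<bar> = \<bar>X \<omega> / Z \<omega>\<bar> * Z \<omega>" using Z by (simp add: abs_divide)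
    also have "\<dots> \<le> \<bar>c\<bar> * Z \<omega>" using c w Z by (intro mult_right_mono) force+
    finally show "\<bar>X \<omega>\<bar> \<le> \<bar>c\<bar> * Z \<omega>" .
  qed
  then show ?thesis using that[of "\<bar>c\<bar>"] by auto
qed

lemma caZ_integrable:
  assumes "\<mu> \<in> caZ \<Omega> Z" "continuous_on \<Omega> Z" "\<forall>\<omega>\<in>\<Omega>. 1 \<le> Z \<omega>" "X \<in> CZ \<Omega> Z"
  shows "integrable \<mu> X"
proof -
  obtain c where c: "c \<ge> 0" "\<forall>\<omega>\<in>\<Omega>. \<bar>X \<omega>\<bar> \<le> c * Z \<omega>" using CZ_bound[OF assms(4,3)] by blast
  have sp: "space \<mu> = \<Omega>" using assms(1) by (simp add: caZ_def)
  show ?thesis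
  proof (rule Bochner_Integration.integrable_bound)
    show "integrable \<mu> (\<lambda>\<omega>. c * Z \<omega>)" using caZ_integrable_Z[OF assms(1-3)] by simp
    show "X \<in> borel_measurable \<mu>" using assms(4) by (intro caZ_meas[OF assms(1)]) (simp add: CZ_def)
    show "AE x in \<mu>. norm (X x) \<le> norm (c * Z x)"
      using c assms(3) sp by (intro AE_I2) (force simp: abs_mult)
  qed
qed

lemma caZ_pairing_bound:
  assumes "\<mu> \<in> caZ \<Omega> Z" "continuous_on \<Omega> Z" "\<forall>\<omega>\<in>\<Omega>. 1 \<le> Z \<omega>" "X \<in> CZ \<Omega> Z"
    and c: "\<forall>\<omega>\<in>\<Omega>. \<bar>X \<omega>\<bar> \<le> c * Z \<omega>"
  shows "\<bar>pairing X \<mu>\<bar> \<le> c * pairing Z \<mu>"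
proof -
  have sp: "space \<mu> = \<Omega>" using assms(1) by (simp add: caZ_def)
  have iX: "integrable \<mu> X" by (rule caZ_integrable[OF assms(1-4)])
  have iZ: "integrable \<mu> Z" by (rule caZ_integrable_Z[OF assms(1-3)])
  have "\<bar>pairing X \<mu>\<bar> \<le> (\<integral>\<omega>. \<bar>X \<omega>\<bar> \<partial>\<mu>)" unfolding pairing_def
    using integral_norm_bound[of \<mu> X] by simp
  also have "\<dots> \<le> (\<integral>\<omega>. c * Z \<omega> \<partial>\<mu>)"
    using iX iZ c sp by (intro integral_mono) auto
  also have "\<dots> = c * pairing Z \<mu>" by (simp add: pairing_def)
  finally show ?thesis .
qed



lemma CZ_I:
  assumes "continuous_on \<Omega> X" "\<forall>\<omega>\<in>\<Omega>. \<bar>X \<omega>\<bar> \<le> c * Z \<omega>" "\<forall>\<omega>\<in>\<Omega>. 1 \<le> Z \<omega>"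
  shows "X \<in> CZ \<Omega> Z"
  unfolding CZ_def
proof (intro CollectI conjI exI)
  show "continuous_on \<Omega> X" by fact
  show "\<forall>\<omega>\<in>\<Omega>. \<bar>X \<omega> / Z \<omega>\<bar> \<le> c"
  proof
    fix \<omega> assume w: "\<omega> \<in> \<Omega>"
    then have Z: "Z \<omega> > 0" using assms(3) by force
    show "\<bar>X \<omega> / Z \<omega>\<bar> \<le> c" using assms(2) w Z by (simp add: abs_divide divide_le_eq)
  qed
qed

lemma CZ_cont: "X \<in> CZ \<Omega> Z \<Longrightarrow> continuous_on \<Omega> X"
  by (simp add: CZ_def)

lemma CZ_add:
  assumes "X \<in> CZ \<Omega> Z" "Y \<in> CZ \<Omega> Z" "\<forall>\<omega>\<in>\<Omega>. 1 \<le> Z \<omega>"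
  shows "(\<lambda>\<omega>. X \<omega> + Y \<omega>) \<in> CZ \<Omega> Z"
proof -
  obtain c where c: "\<forall>\<omega>\<in>\<Omega>. \<bar>X \<omega>\<bar> \<le> c * Z \<omega>" using CZ_bound[OF assms(1,3)] by blast
  obtain d where d: "\<forall>\<omega>\<in>\<Omega>. \<bar>Y \<omega>\<bar> \<le> d * Z \<omega>" using CZ_bound[OF assms(2,3)] by blast
  show ?thesis
  proof (rule CZ_I[where c="c+d"])
    show "continuous_on \<Omega> (\<lambda>\<omega>. X \<omega> + Y \<omega>)" using assms by (intro continuous_intros CZ_cont)
    show "\<forall>\<omega>\<in>\<Omega>. \<bar>X \<omega> + Y \<omega>\<bar> \<le> (c + d) * Z \<omega>"
      using c d by (auto simp: distrib_right intro: order.trans[OF abs_triangle_ineq] add_mono)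
  qed fact
qed

lemma CZ_scale:
  assumes "X \<in> CZ \<Omega> Z" "\<forall>\<omega>\<in>\<Omega>. 1 \<le> Z \<omega>"
  shows "(\<lambda>\<omega>. r * X \<omega>) \<in> CZ \<Omega> Z"
proof -
  obtain c where c: "c \<ge> 0" "\<forall>\<omega>\<in>\<Omega>. \<bar>X \<omega>\<bar> \<le> c * Z \<omega>" using CZ_bound[OF assms(1,2)] by blast
  show ?thesis
  proof (rule CZ_I[where c="\<bar>r\<bar> * c"])
    show "continuous_on \<Omega> (\<lambda>\<omega>. r * X \<omega>)" using assms by (intro continuous_intros CZ_cont)
    show "\<forall>\<omega>\<in>\<Omega>. \<bar>r * X \<omega>\<bar> \<le> (\<bar>r\<bar> * c) * Z \<omega>"
      using c by (auto simp: abs_mult mult.assoc intro: mult_left_mono)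
  qed fact
qed

lemma CZ_Z:
  assumes "continuous_on \<Omega> Z" "\<forall>\<omega>\<in>\<Omega>. 1 \<le> Z \<omega>"
  shows "Z \<in> CZ \<Omega> Z"
  using assms by (intro CZ_I[where c=1]) auto

lemma CZ_Zpart:
  assumes "continuous_on \<Omega> Z" "\<forall>\<omega>\<in>\<Omega>. 1 \<le> Z \<omega>"
  shows "(\<lambda>\<omega>. max (Z \<omega> - z) 0) \<in> CZ \<Omega> Z"
proof (rule CZ_I[where c="1 + \<bar>z\<bar>"])
  show "continuous_on \<Omega> (\<lambda>\<omega>. max (Z \<omega> - z) 0)" using assms by (intro continuous_intros)
  show "\<forall>\<omega>\<in>\<Omega>. \<bar>max (Z \<omega> - z) 0\<bar> \<le> (1 + \<bar>z\<bar>) * Z \<omega>"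
  proof
    fix \<omega> assume "\<omega> \<in> \<Omega>"
    then have "1 \<le> Z \<omega>" using assms by auto
    then have "\<bar>z\<bar> \<le> \<bar>z\<bar> * Z \<omega>" by (simp add: mult_le_cancel_left1)
    then show "\<bar>max (Z \<omega> - z) 0\<bar> \<le> (1 + \<bar>z\<bar>) * Z \<omega>" using \<open>1 \<le> Z \<omega>\<close> by (auto simp: distrib_right)
  qed
qed fact



locale rz =
  fixes \<Omega> :: "'a::metric_space set" and Z :: "'a \<Rightarrow> real" and L :: "('a \<Rightarrow> real) \<Rightarrow> real"
  assumes \<Omega>_ne: "\<Omega> \<noteq> {}"
    and Z_ge1: "\<forall>\<omega>\<in>\<Omega>. 1 \<le> Z \<omega>"
    and Z_cont: "continuous_on \<Omega> Z"
    and Z_compact: "\<forall>z::real. 0 \<le> z \<longrightarrow> compact {\<omega>\<in>\<Omega>. Z \<omega> \<le> z}"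
    and L_add: "\<And>X Y. X \<in> CZ \<Omega> Z \<Longrightarrow> Y \<in> CZ \<Omega> Z \<Longrightarrow> L (\<lambda>\<omega>. X \<omega> + Y \<omega>) = L X + L Y"
    and L_scale: "\<And>X r. X \<in> CZ \<Omega> Z \<Longrightarrow> L (\<lambda>\<omega>. r * X \<omega>) = r * L X"
    and L_pos: "\<And>X. X \<in> CZ \<Omega> Z \<Longrightarrow> (\<forall>\<omega>\<in>\<Omega>. 0 \<le> X \<omega>) \<Longrightarrow> 0 \<le> L X"
    and L_tight: "((\<lambda>z. L (\<lambda>\<omega>. max (Z \<omega> - z) 0)) \<longlongrightarrow> 0) at_top"
begin

abbreviation "C \<equiv> CZ \<Omega> Z"

lemma bdd_C:
  assumes "continuous_on \<Omega> f" "\<forall>x\<in>\<Omega>. \<bar>f x\<bar> \<le> B"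
  shows "f \<in> C"
proof (rule CZ_I[OF assms(1) _ Z_ge1, where c="\<bar>B\<bar>"])
  show "\<forall>\<omega>\<in>\<Omega>. \<bar>f \<omega>\<bar> \<le> \<bar>B\<bar> * Z \<omega>"
  proof
    fix x assume x: "x \<in> \<Omega>"
    have "\<bar>f x\<bar> \<le> \<bar>B\<bar>" using assms(2) x by force
    also have "\<dots> \<le> \<bar>B\<bar> * Z x" using Z_ge1 x by (simp add: mult_le_cancel_left1)
    finally show "\<bar>f x\<bar> \<le> \<bar>B\<bar> * Z x" .
  qed
qed

lemma one_C: "(\<lambda>_. 1) \<in> C"
  by (rule bdd_C[where B=1]) auto

lemma C_add: "X \<in> C \<Longrightarrow> Y \<in> C \<Longrightarrow> (\<lambda>\<omega>. X \<omega> + Y \<omega>) \<in> C"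
  using CZ_add Z_ge1 by blast
lemma C_scale: "X \<in> C \<Longrightarrow> (\<lambda>\<omega>. r * X \<omega>) \<in> C"
  using CZ_scale Z_ge1 by blast
lemma C_minus: "X \<in> C \<Longrightarrow> (\<lambda>\<omega>. - X \<omega>) \<in> C"
  using C_scale[of X "-1"] by simp
lemma C_diff: "X \<in> C \<Longrightarrow> Y \<in> C \<Longrightarrow> (\<lambda>\<omega>. X \<omega> - Y \<omega>) \<in> C"
  using C_add[OF _ C_minus, of X Y] by simp
lemma C_cont: "X \<in> C \<Longrightarrow> continuous_on \<Omega> X"
  by (simp add: CZ_def)

lemma C_max0: "X \<in> C \<Longrightarrow> (\<lambda>\<omega>. max (X \<omega>) 0) \<in> C"
proof -
  assume X: "X \<in> C"
  obtain c where c: "c \<ge> 0" "\<forall>\<omega>\<in>\<Omega>. \<bar>X \<omega>\<bar> \<le> c * Z \<omega>" using CZ_bound[OF X Z_ge1] by blast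
  show ?thesis
    by (rule CZ_I[OF _ _ Z_ge1, where c=c]) (use c C_cont[OF X] in \<open>auto intro!: continuous_intros\<close>)
qed

lemma C_min: "X \<in> C \<Longrightarrow> (\<lambda>\<omega>. min (X \<omega>) r) \<in> C"
proof -
  assume X: "X \<in> C"
  obtain c where c: "c \<ge> 0" "\<forall>\<omega>\<in>\<Omega>. \<bar>X \<omega>\<bar> \<le> c * Z \<omega>" using CZ_bound[OF X Z_ge1] by blast
  show ?thesis
  proof (rule CZ_I[OF _ _ Z_ge1, where c="c + \<bar>r\<bar>"])
    show "continuous_on \<Omega> (\<lambda>\<omega>. min (X \<omega>) r)" using C_cont[OF X] by (intro continuous_intros)
    show "\<forall>\<omega>\<in>\<Omega>. \<bar>min (X \<omega>) r\<bar> \<le> (c + \<bar>r\<bar>) * Z \<omega>"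
    proof
      fix x assume x: "x \<in> \<Omega>"
      have "\<bar>r\<bar> \<le> \<bar>r\<bar> * Z x" using Z_ge1 x by (simp add: mult_le_cancel_left1)
      then show "\<bar>min (X x) r\<bar> \<le> (c + \<bar>r\<bar>) * Z x" using c x by (auto simp: distrib_right)
    qed
  qed
qed

lemma L_minus: "X \<in> C \<Longrightarrow> L (\<lambda>\<omega>. - X \<omega>) = - L X"
  using L_scale[of X "-1"] by simp

lemma L_diff: "X \<in> C \<Longrightarrow> Y \<in> C \<Longrightarrow> L (\<lambda>\<omega>. X \<omega> - Y \<omega>) = L X - L Y"
  using L_add[OF _ C_minus, of X Y] L_minus[of Y] by simp

lemma L_mono: "X \<in> C \<Longrightarrow> Y \<in> C \<Longrightarrow> (\<forall>\<omega>\<in>\<Omega>. X \<omega> \<le> Y \<omega>) \<Longrightarrow> L X \<le> L Y"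
  using L_pos[OF C_diff, of Y X] L_diff[of Y X] by simp

lemma L_cong: "X \<in> C \<Longrightarrow> Y \<in> C \<Longrightarrow> (\<forall>\<omega>\<in>\<Omega>. X \<omega> = Y \<omega>) \<Longrightarrow> L X = L Y"
  using L_mono[of X Y] L_mono[of Y X] by simp

lemma L_sum: "finite J \<Longrightarrow> (\<And>j. j \<in> J \<Longrightarrow> f j \<in> C) \<Longrightarrow> L (\<lambda>\<omega>. \<Sum>j\<in>J. f j \<omega>) = (\<Sum>j\<in>J. L (f j))
   \<and> (\<lambda>\<omega>. \<Sum>j\<in>J. f j \<omega>) \<in> C"
proof (induction J rule: finite_induct)
  case empty
  have "L (\<lambda>\<omega>. 0 * 1) = 0 * L (\<lambda>_. 1)" by (rule L_scale[OF one_C])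
  then show ?case using bdd_C[of "\<lambda>_. 0" 0] by simp
next
  case (insert j J)
  have "L (\<lambda>\<omega>. f j \<omega> + (\<Sum>j\<in>J. f j \<omega>)) = L (f j) + L (\<lambda>\<omega>. \<Sum>j\<in>J. f j \<omega>)"
    using insert by (intro L_add) auto
  then show ?case using insert C_add[of "f j" "\<lambda>\<omega>. \<Sum>j\<in>J. f j \<omega>"] by simp
qed

lemma L_zero: "X \<in> C \<Longrightarrow> (\<forall>\<omega>\<in>\<Omega>. X \<omega> = 0) \<Longrightarrow> L X = 0"
  using L_pos[of X] L_pos[OF C_minus, of X] L_minus[of X] by simp

end


lemma cont_squeeze:
  fixes f g :: "'a::metric_space \<Rightarrow> real"
  assumes f: "continuous_on S f" and bnd: "\<forall>x\<in>S. \<bar>g x\<bar> \<le> f x"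
    and c: "\<forall>x\<in>S. f x \<noteq> 0 \<longrightarrow> (g \<longlongrightarrow> g x) (at x within S)"
  shows "continuous_on S g"
  unfolding continuous_on_def
proof
  fix x assume x: "x \<in> S"
  show "(g \<longlongrightarrow> g x) (at x within S)"
  proof (cases "f x = 0")
    case False then show ?thesis using c x by blast
  next
    case True
    then have gx: "g x = 0" using bnd x by force
    have fx: "(f \<longlongrightarrow> 0) (at x within S)" using f x True unfolding continuous_on_def by force
    show ?thesis unfolding gx
    proof (rule tendsto_sandwich[where f="\<lambda>y. - f y" and h=f])
      show "\<forall>\<^sub>F y in at x within S. - f y \<le> g y" using bnd by (auto simp: eventually_at_filter abs_le_iff intro!: always_eventually)
      show "\<forall>\<^sub>F y in at x within S. g y \<le> f y" using bnd by (auto simp: eventually_at_filter abs_le_iff intro!: always_eventually)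
      show "((\<lambda>y. - f y) \<longlongrightarrow> 0) (at x within S)" using tendsto_minus[OF fx] by simp
    qed fact
  qed
qed

context rz begin

definition "ropen G \<longleftrightarrow> openin (top_of_set \<Omega>) G"
definition "Bs G = {f :: 'a \<Rightarrow> real. continuous_on \<Omega> f \<and> (\<forall>x\<in>\<Omega>. 0 \<le> f x \<and> f x \<le> 1) \<and> (\<forall>x\<in>\<Omega>. x \<notin> G \<longrightarrow> f x = 0)}"
definition "nu G = (SUP f\<in>Bs G. L f)"

lemma ropen_sub: "ropen G \<Longrightarrow> G \<subseteq> \<Omega>"
  unfolding ropen_def by (auto dest: openin_imp_subset)

lemma Bs_C: "f \<in> Bs G \<Longrightarrow> f \<in> C"
  unfolding Bs_def by (rule bdd_C[where B=1]) auto

lemma Bs_L: "f \<in> Bs G \<Longrightarrow> 0 \<le> L f \<and> L f \<le> L (\<lambda>_. 1)"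
  using L_pos[OF Bs_C] L_mono[OF Bs_C one_C] by (auto simp: Bs_def)

lemma zero_Bs: "(\<lambda>_. 0) \<in> Bs G"
  by (simp add: Bs_def)

lemma Bs_ne: "Bs G \<noteq> {}" using zero_Bs by blast

lemma bdd_nu: "bdd_above (L ` Bs G)"
  using Bs_L by (auto intro!: bdd_aboveI)

lemma nu_ge: "f \<in> Bs G \<Longrightarrow> L f \<le> nu G"
  unfolding nu_def by (rule cSUP_upper[OF _ bdd_nu])

lemma nu_le: "(\<And>f. f \<in> Bs G \<Longrightarrow> L f \<le> c) \<Longrightarrow> nu G \<le> c"
  unfolding nu_def by (rule cSUP_least[OF Bs_ne])

lemma nu_nonneg: "0 \<le> nu G"
  using nu_ge[OF zero_Bs] L_zero[OF Bs_C[OF zero_Bs]] by simp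

lemma nu_le1: "nu G \<le> L (\<lambda>_. 1)"
  using Bs_L by (intro nu_le) auto

lemma Bs_mono: "G \<subseteq> H \<Longrightarrow> Bs G \<subseteq> Bs H"
  by (auto simp: Bs_def)

lemma nu_mono: "G \<subseteq> H \<Longrightarrow> nu G \<le> nu H"
  using Bs_mono nu_ge by (intro nu_le) blast

lemma nu_empty: "nu {} = 0"
  using L_zero[OF Bs_C] nu_nonneg by (intro antisym nu_le) (auto simp: Bs_def)

lemma nu_approx: assumes "e > 0" shows "\<exists>f\<in>Bs G. nu G - e < L f"
proof -
  have "nu G - e < (SUP f\<in>Bs G. L f)" using assms by (simp add: nu_def)
  then show ?thesis using less_cSUP_iff[OF Bs_ne bdd_nu] by blast
qed

lemma one_Bs: "(\<lambda>_. 1) \<in> Bs \<Omega>" by (simp add: Bs_def)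

lemma nu_Omega: "nu \<Omega> = L (\<lambda>_. 1)"
  using nu_ge[OF one_Bs] nu_le1[of \<Omega>] by linarith

definition "da G x = (if \<Omega> - G = {} then 1 else infdist x (\<Omega> - G))"

lemma da_cont: "continuous_on UNIV (da G)"
  unfolding da_def by (cases "\<Omega> - G = {}") (auto intro!: continuous_intros)

lemma da_nonneg: "0 \<le> da G x"
  by (simp add: da_def infdist_nonneg)

lemma da_zero: "x \<in> \<Omega> \<Longrightarrow> x \<notin> G \<Longrightarrow> da G x = 0"
  by (auto simp: da_def)

lemma da_pos: "ropen G \<Longrightarrow> x \<in> G \<Longrightarrow> 0 < da G x"
proof (cases "\<Omega> - G = {}")
  case False
  assume G: "ropen G" "x \<in> G"
  obtain e where e: "e > 0" "\<forall>x'\<in>\<Omega>. dist x' x < e \<longrightarrow> x' \<in> G"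
    using G unfolding ropen_def openin_euclidean_subtopology_iff by blast
  have "infdist x (\<Omega> - G) \<noteq> 0"
  proof
    assume "infdist x (\<Omega> - G) = 0"
    then have "x \<in> closure (\<Omega> - G)" using in_closure_iff_infdist_zero[OF False] by simp
    then obtain y where "y \<in> \<Omega> - G" "dist y x < e" using e(1) closure_approachable by blast
    then show False using e by blast
  qed
  then show ?thesis using False infdist_nonneg[of x "\<Omega> - G"] by (simp add: da_def)
qed (simp add: da_def)

lemma da_tendsto: "(da G \<longlongrightarrow> da G x) (at x within S)"
  using da_cont[of G] unfolding continuous_on_def
  by (meson UNIV_I tendsto_within_subset top_greatest)

lemma split2:
  assumes G: "ropen G" and H: "ropen H" and f: "f \<in> Bs (G \<union> H)"
  shows "\<exists>g1\<in>Bs G. \<exists>g2\<in>Bs H. \<forall>x\<in>\<Omega>. f x = g1 x + g2 x"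
proof -
  define a where "a = da G"
  define b where "b = da H"
  define g1 where "g1 x = f x * a x / (a x + b x)" for x
  define g2 where "g2 x = f x * b x / (a x + b x)" for x
  have fc: "continuous_on \<Omega> f" and f01: "\<forall>x\<in>\<Omega>. 0 \<le> f x \<and> f x \<le> 1"
    and f0: "\<forall>x\<in>\<Omega>. x \<notin> G \<union> H \<longrightarrow> f x = 0" using f by (auto simp: Bs_def)
  have a0: "0 \<le> a x" "0 \<le> b x" for x by (auto simp: a_def b_def da_nonneg)
  have ab_pos: "0 < a x + b x" if "x \<in> \<Omega>" "f x \<noteq> 0" for x
  proof -
    have "x \<in> G \<union> H" using that f0 by blast
    then show ?thesis using da_pos[OF G] da_pos[OF H] a0 unfolding a_def b_def
      by (auto intro: add_pos_nonneg add_nonneg_pos)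
  qed
  have frac: "0 \<le> a x / (a x + b x) \<and> a x / (a x + b x) \<le> 1" "0 \<le> b x / (a x + b x) \<and> b x / (a x + b x) \<le> 1" for x
    using a0[of x] by (auto simp: divide_le_eq_1)
  have g1b: "\<bar>g1 x\<bar> \<le> f x" "\<bar>g2 x\<bar> \<le> f x" "0 \<le> g1 x" "0 \<le> g2 x" if "x \<in> \<Omega>" for x
  proof -
    have fx: "0 \<le> f x" using f01 that by blast
    have "g1 x = f x * (a x / (a x + b x))" "g2 x = f x * (b x / (a x + b x))" by (simp_all add: g1_def g2_def)
    moreover have "f x * (a x / (a x + b x)) \<le> f x" "f x * (b x / (a x + b x)) \<le> f x"
      using frac[of x] fx by (metis mult_left_le)+
    moreover have "0 \<le> f x * (a x / (a x + b x))" "0 \<le> f x * (b x / (a x + b x))"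
      using frac[of x] fx by (metis mult_nonneg_nonneg)+
    ultimately show "\<bar>g1 x\<bar> \<le> f x" "\<bar>g2 x\<bar> \<le> f x" "0 \<le> g1 x" "0 \<le> g2 x"
      by (simp_all only: abs_of_nonneg)
  qed
  have lim: "(g1 \<longlongrightarrow> g1 x) (at x within \<Omega>) \<and> (g2 \<longlongrightarrow> g2 x) (at x within \<Omega>)"
    if "x \<in> \<Omega>" "f x \<noteq> 0" for x
  proof -
    have ft: "(f \<longlongrightarrow> f x) (at x within \<Omega>)" using fc that(1) unfolding continuous_on_def by blast
    have "a x + b x \<noteq> 0" using ab_pos[OF that] by simp
    then show ?thesis unfolding g1_def g2_def a_def b_def
      by (intro conjI tendsto_intros ft da_tendsto) (auto simp: a_def b_def)
  qed
  have g1: "g1 \<in> Bs G"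
    unfolding Bs_def
  proof (intro CollectI conjI ballI impI)
    show "continuous_on \<Omega> g1" using lim g1b by (intro cont_squeeze[OF fc]) auto
    fix x assume x: "x \<in> \<Omega>"
    show "0 \<le> g1 x" using g1b x by blast
    show "g1 x \<le> 1" using g1b[OF x] f01 x by force
    assume "x \<notin> G"
    then show "g1 x = 0" using da_zero[OF x] by (simp add: g1_def a_def)
  qed
  have g2: "g2 \<in> Bs H"
    unfolding Bs_def
  proof (intro CollectI conjI ballI impI)
    show "continuous_on \<Omega> g2" using lim g1b by (intro cont_squeeze[OF fc]) auto
    fix x assume x: "x \<in> \<Omega>"
    show "0 \<le> g2 x" using g1b x by blast
    show "g2 x \<le> 1" using g1b[OF x] f01 x by force
    assume "x \<notin> H"
    then show "g2 x = 0" using da_zero[OF x] by (simp add: g2_def b_def)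
  qed
  have "\<forall>x\<in>\<Omega>. f x = g1 x + g2 x"
  proof
    fix x assume x: "x \<in> \<Omega>"
    show "f x = g1 x + g2 x"
    proof (cases "f x = 0")
      case True then show ?thesis by (simp add: g1_def g2_def)
    next
      case False
      then have "a x + b x \<noteq> 0" using ab_pos[OF x] by simp
      then show ?thesis by (simp add: g1_def g2_def add_divide_distrib[symmetric] distrib_left[symmetric])
    qed
  qed
  then show ?thesis using g1 g2 by blast
qed

lemma ropen_Un: "ropen G \<Longrightarrow> ropen H \<Longrightarrow> ropen (G \<union> H)"
  by (simp add: ropen_def openin_Un)

lemma nu_Un: assumes "ropen G" "ropen H" shows "nu (G \<union> H) \<le> nu G + nu H"
proof (rule nu_le)
  fix f assume f: "f \<in> Bs (G \<union> H)"
  obtain g1 g2 where g: "g1 \<in> Bs G" "g2 \<in> Bs H" "\<forall>x\<in>\<Omega>. f x = g1 x + g2 x"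
    using split2[OF assms f] by blast
  have "L f = L (\<lambda>x. g1 x + g2 x)" using g Bs_C f C_add by (intro L_cong) auto
  also have "\<dots> = L g1 + L g2" using g Bs_C by (intro L_add) auto
  also have "\<dots> \<le> nu G + nu H" using g nu_ge by (intro add_mono) auto
  finally show "L f \<le> nu G + nu H" .
qed

lemma nu_Un_finite: "(\<And>i. i < (m::nat) \<Longrightarrow> ropen (G i)) \<Longrightarrow> nu (\<Union>i<m. G i) \<le> (\<Sum>i<m. nu (G i)) \<and> ropen (\<Union>i<m. G i)"
proof (induction m)
  case 0
  then show ?case by (simp add: nu_empty ropen_def)
next
  case (Suc m)
  have "nu (\<Union>i<Suc m. G i) = nu (G m \<union> (\<Union>i<m. G i))" by (simp add: lessThan_Suc Un_commute)
  also have "\<dots> \<le> nu (G m) + nu (\<Union>i<m. G i)" using Suc by (intro nu_Un) auto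
  also have "\<dots> \<le> nu (G m) + (\<Sum>i<m. nu (G i))" using Suc by auto
  finally show ?case using Suc ropen_Un[of "G m" "\<Union>i<m. G i"] by (simp add: lessThan_Suc Un_commute add.commute)
qed

end


context rz begin

lemma compact_level: "0 \<le> z \<Longrightarrow> compact {x\<in>\<Omega>. Z x \<le> z}"
  using Z_compact by blast

lemma cover_core:
  fixes G :: "nat \<Rightarrow> 'a set"
  assumes G: "\<And>i. ropen (G i)" and f: "f \<in> Bs (\<Union>i. G i)" and e: "e > 0"
  shows "\<exists>m. L f \<le> (\<Sum>i<m. nu (G i)) + e"
proof -
  define L1 where "L1 = L (\<lambda>_. 1)"
  have L1: "0 \<le> L1" using L_pos[OF one_C] by (simp add: L1_def)
  define \<delta> where "\<delta> = e / (2 * (L1 + 1))"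
  have \<delta>: "\<delta> > 0" "\<delta> * L1 \<le> e / 2" using e L1
    by (auto simp: \<delta>_def field_simps)
  have "eventually (\<lambda>z. L (\<lambda>\<omega>. max (Z \<omega> - z) 0) < e / 2) at_top"
    using L_tight e by (intro order_tendstoD(2)) auto
  moreover have "eventually (\<lambda>z. z \<ge> (0::real)) at_top" by (rule eventually_ge_at_top)
  ultimately have "eventually (\<lambda>z. z \<ge> 0 \<and> L (\<lambda>\<omega>. max (Z \<omega> - z) 0) < e / 2) at_top"
    by (rule eventually_conj[rotated])
  then obtain N where "\<forall>n\<ge>N. n \<ge> 0 \<and> L (\<lambda>\<omega>. max (Z \<omega> - n) 0) < e / 2"
    unfolding eventually_at_top_linorder by blast
  then obtain z where z: "z \<ge> 0" "L (\<lambda>\<omega>. max (Z \<omega> - z) 0) < e / 2" by blast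
  have fc: "continuous_on \<Omega> f" and f01: "\<forall>x\<in>\<Omega>. 0 \<le> f x \<and> f x \<le> 1"
    and f0: "\<forall>x\<in>\<Omega>. x \<notin> (\<Union>i. G i) \<longrightarrow> f x = 0" using f by (auto simp: Bs_def)
  define K where "K = {x\<in>\<Omega>. Z x \<le> z + 1}"
  have cK: "compact K" unfolding K_def using z by (intro compact_level) auto
  define Kc where "Kc = K \<inter> f -` {\<delta>..}"
  have "closedin (top_of_set K) Kc" unfolding Kc_def
    using fc by (intro continuous_closedin_preimage) (auto simp: K_def intro: continuous_on_subset)
  then have cKc: "compact Kc" using cK closedin_compact by blast
  obtain U where U: "\<And>i. open (U i) \<and> G i = \<Omega> \<inter> U i"
    using G unfolding ropen_def openin_open by metis
  have "Kc \<subseteq> (\<Union>i\<in>UNIV. U i)"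
  proof
    fix x assume "x \<in> Kc"
    then have "x \<in> \<Omega>" "f x \<ge> \<delta>" by (auto simp: Kc_def K_def)
    then have "f x \<noteq> 0" using \<delta> by linarith
    then have "x \<in> (\<Union>i. G i)" using f0 \<open>x \<in> \<Omega>\<close> by blast
    then show "x \<in> (\<Union>i\<in>UNIV. U i)" using U by blast
  qed
  note Kccov = this
  obtain I where I: "finite I" "Kc \<subseteq> (\<Union>i\<in>I. U i)"
    by (rule compactE_image[OF cKc, of UNIV U]) (use U Kccov in blast)+
  obtain m where m: "I \<subseteq> {..<m}" using finite_nat_bounded[OF I(1)] by blast
  have KcG: "Kc \<subseteq> (\<Union>i<m. G i)"
  proof
    fix x assume x: "x \<in> Kc"
    then have "x \<in> \<Omega>" by (auto simp: Kc_def K_def)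
    moreover obtain i where "i \<in> I" "x \<in> U i" using I x by blast
    ultimately show "x \<in> (\<Union>i<m. G i)" using U m by blast
  qed
  define c where "c x = min 1 (max 0 (z + 1 - Z x))" for x
  define g where "g x = c x * max (f x - \<delta>) 0" for x
  have gB: "g \<in> Bs (\<Union>i<m. G i)"
    unfolding Bs_def
  proof (intro CollectI conjI ballI impI)
    show "continuous_on \<Omega> g" unfolding g_def c_def using fc Z_cont by (intro continuous_intros)
    fix x assume x: "x \<in> \<Omega>"
    have c01: "0 \<le> c x" "c x \<le> 1" by (auto simp: c_def)
    have "0 \<le> max (f x - \<delta>) 0" "max (f x - \<delta>) 0 \<le> 1" using f01 x \<delta> by auto
    then show "0 \<le> g x" "g x \<le> 1" using c01 unfolding g_def by (auto intro: mult_le_one)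
    assume "x \<notin> (\<Union>i<m. G i)"
    then have "x \<notin> Kc" using KcG by blast
    then have "Z x > z + 1 \<or> f x < \<delta>" using x by (auto simp: Kc_def K_def)
    then show "g x = 0" by (auto simp: g_def c_def)
  qed
  have gC: "g \<in> C" by (rule Bs_C[OF gB])
  have PC: "(\<lambda>\<omega>. max (Z \<omega> - z) 0) \<in> C" by (rule CZ_Zpart[OF Z_cont Z_ge1])
  have dC: "(\<lambda>\<omega>. \<delta> * 1) \<in> C" using C_scale[OF one_C] by simp
  have sumC: "(\<lambda>x. \<delta> * 1 + g x) \<in> C" using C_add[OF dC gC] by simp
  have point: "f x \<le> \<delta> * 1 + g x + max (Z x - z) 0" if x: "x \<in> \<Omega>" for x
  proof -
    define u where "u = max (f x - \<delta>) 0"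
    have u: "0 \<le> u" "u \<le> 1" "f x \<le> \<delta> + u" using f01 x \<delta> by (auto simp: u_def)
    have c01: "0 \<le> c x" "c x \<le> 1" by (auto simp: c_def)
    have "(1 - c x) * u \<le> 1 - c x" using u c01 by (intro mult_left_le) auto
    then have "u \<le> c x * u + (1 - c x)" by (simp add: algebra_simps)
    moreover have "1 - c x \<le> max (Z x - z) 0" unfolding c_def by (simp add: min_def max_def)
    ultimately show ?thesis using u unfolding g_def u_def[symmetric] by linarith
  qed
  have "L f \<le> L (\<lambda>x. (\<delta> * 1 + g x) + max (Z x - z) 0)"
    using point by (intro L_mono Bs_C[OF f] C_add[OF sumC PC]) auto
  also have "\<dots> = L (\<lambda>x. \<delta> * 1 + g x) + L (\<lambda>\<omega>. max (Z \<omega> - z) 0)"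
    by (rule L_add[OF sumC PC])
  also have "L (\<lambda>x. \<delta> * 1 + g x) = L (\<lambda>x. \<delta> * 1) + L g"
    by (rule L_add[OF dC gC])
  also have "L (\<lambda>x. \<delta> * 1) = \<delta> * L1" unfolding L1_def by (rule L_scale[OF one_C])
  also have "L g \<le> nu (\<Union>i<m. G i)" by (rule nu_ge[OF gB])
  also have "nu (\<Union>i<m. G i) \<le> (\<Sum>i<m. nu (G i))" using nu_Un_finite[of m G] G by blast
  finally have "L f \<le> \<delta> * L1 + (\<Sum>i<m. nu (G i)) + L (\<lambda>\<omega>. max (Z \<omega> - z) 0)" by simp
  then show ?thesis using \<delta> z by (intro exI[of _ m]) linarith
qed

lemma nu_UN:
  fixes G :: "nat \<Rightarrow> 'a set"
  assumes G: "\<And>i. ropen (G i)"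
  shows "ennreal (nu (\<Union>i. G i)) \<le> (\<Sum>i. ennreal (nu (G i)))"
proof -
  have key: "ennreal (L f) \<le> (\<Sum>i. ennreal (nu (G i)))" if f: "f \<in> Bs (\<Union>i. G i)" for f
  proof (rule ennreal_le_epsilon)
    fix e :: real assume e: "0 < e"
    obtain m where m: "L f \<le> (\<Sum>i<m. nu (G i)) + e" using cover_core[OF G f e] by blast
    have "ennreal (L f) \<le> ennreal ((\<Sum>i<m. nu (G i)) + e)" using m by (rule ennreal_leI)
    also have "\<dots> = (\<Sum>i<m. ennreal (nu (G i))) + ennreal e"
      using e nu_nonneg by (simp add: ennreal_plus sum_nonneg sum_ennreal)
    also have "(\<Sum>i<m. ennreal (nu (G i))) \<le> (\<Sum>i. ennreal (nu (G i)))"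
      by (intro sum_le_suminf summableI) auto
    finally show "ennreal (L f) \<le> (\<Sum>i. ennreal (nu (G i))) + ennreal e" by simp
  qed
  show ?thesis
  proof (cases "(\<Sum>i. ennreal (nu (G i))) = top")
    case True then show ?thesis by simp
  next
    case False
    then obtain s where s: "(\<Sum>i. ennreal (nu (G i))) = ennreal s" "0 \<le> s"
      using ennreal_cases[of "\<Sum>i. ennreal (nu (G i))"] by auto
    have "nu (\<Union>i. G i) \<le> s"
    proof (rule nu_le)
      fix f assume "f \<in> Bs (\<Union>i. G i)"
      then show "L f \<le> s" using key s by (metis ennreal_le_iff)
    qed
    then show ?thesis using s by (simp add: ennreal_leI)
  qed
qed

end


context rz begin

definition "nus A = (INF G\<in>{G. ropen G \<and> A \<subseteq> G}. nu G)"

lemma ropen_Omega: "ropen \<Omega>"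
  unfolding ropen_def using openin_topspace[of "top_of_set \<Omega>"] by simp

lemma bdd_nus: "bdd_below (nu ` {G. ropen G \<and> A \<subseteq> G})"
  using nu_nonneg by (auto intro!: bdd_belowI)

lemma nus_le: "ropen G \<Longrightarrow> A \<subseteq> G \<Longrightarrow> nus A \<le> nu G"
  unfolding nus_def by (rule cINF_lower[OF bdd_nus]) auto

lemma nus_ge: "A \<subseteq> \<Omega> \<Longrightarrow> (\<And>G. ropen G \<Longrightarrow> A \<subseteq> G \<Longrightarrow> c \<le> nu G) \<Longrightarrow> c \<le> nus A"
  unfolding nus_def by (rule cINF_greatest) (use ropen_Omega in auto)

lemma nus_open: "ropen G \<Longrightarrow> nus G = nu G"
  using nus_le[of G G] nus_ge[of G "nu G"] nu_mono ropen_sub by (meson antisym order_refl)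

lemma nus_nonneg: "A \<subseteq> \<Omega> \<Longrightarrow> 0 \<le> nus A"
  using nu_nonneg by (intro nus_ge) auto

lemma nus_mono: "A \<subseteq> B \<Longrightarrow> B \<subseteq> \<Omega> \<Longrightarrow> nus A \<le> nus B"
  using nus_le by (intro nus_ge) auto

lemma nus_approx:
  assumes "A \<subseteq> \<Omega>" "e > 0" shows "\<exists>G. ropen G \<and> A \<subseteq> G \<and> nu G < nus A + e"
proof -
  have ne: "{G. ropen G \<and> A \<subseteq> G} \<noteq> {}" using ropen_Omega assms(1) by auto
  have "(INF G\<in>{G. ropen G \<and> A \<subseteq> G}. nu G) < nus A + e" using assms(2) by (simp add: nus_def)
  then show ?thesis using cINF_less_iff[OF ne bdd_nus] by blast
qed

lemma ropen_empty: "ropen {}" by (simp add: ropen_def)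

lemma nus_empty: "nus {} = 0"
  using nus_open[OF ropen_empty] nu_empty by simp

definition "nue A = ennreal (nus A)"

lemma nue_outer: "outer_measure_space (Pow \<Omega>) nue"
  unfolding outer_measure_space_def
proof (intro conjI)
  show "positive (Pow \<Omega>) nue" by (simp add: positive_def nue_def nus_empty)
  show "increasing (Pow \<Omega>) nue"
    unfolding increasing_def nue_def by (auto intro!: ennreal_leI nus_mono)
  show "countably_subadditive (Pow \<Omega>) nue"
    unfolding countably_subadditive_def
  proof (intro allI impI)
    fix A :: "nat \<Rightarrow> 'a set" assume A: "range A \<subseteq> Pow \<Omega>"
    show "nue (\<Union>i. A i) \<le> (\<Sum>i. nue (A i))"
    proof (rule ennreal_le_epsilon)
      fix e :: real assume e: "0 < e"
      have "\<exists>G. ropen G \<and> A n \<subseteq> G \<and> nu G < nus (A n) + e * (1/2)^Suc n" for n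
        using A e by (intro nus_approx) auto
      then obtain G where G: "\<And>n. ropen (G n) \<and> A n \<subseteq> G n \<and> nu (G n) < nus (A n) + e * (1/2)^Suc n"
        by metis
      have UG: "ropen (\<Union>n. G n)" using G unfolding ropen_def by (intro openin_Union) auto
      have "nue (\<Union>i. A i) \<le> ennreal (nu (\<Union>n. G n))"
        unfolding nue_def using G by (intro ennreal_leI nus_le[OF UG]) blast
      also have "\<dots> \<le> (\<Sum>n. ennreal (nu (G n)))" using G by (intro nu_UN) auto
      also have "\<dots> \<le> (\<Sum>n. ennreal (nus (A n)) + ennreal (e * (1/2)^Suc n))"
      proof (intro suminf_le allI)
        fix n
        have "0 \<le> nus (A n)" using A by (intro nus_nonneg) auto
        have "ennreal (nu (G n)) \<le> ennreal (nus (A n) + e * (1/2)^Suc n)"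
          using G[of n] by (intro ennreal_leI) simp
        also have "\<dots> = ennreal (nus (A n)) + ennreal (e * (1/2)^Suc n)"
          using \<open>0 \<le> nus (A n)\<close> e by (intro ennreal_plus) auto
        finally show "ennreal (nu (G n)) \<le> ennreal (nus (A n)) + ennreal (e * (1/2)^Suc n)" .
      qed auto
      also have "\<dots> = (\<Sum>n. nue (A n)) + (\<Sum>n. ennreal (e * (1/2)^Suc n))"
        by (simp add: suminf_add nue_def)
      also have "(\<Sum>n. ennreal (e * (1/2)^Suc n)) = ennreal (e * 1)"
        using e by (intro suminf_ennreal_eq sums_mult power_half_series) auto
      finally show "nue (\<Union>i. A i) \<le> (\<Sum>i. nue (A i)) + ennreal e" by simp
    qed
  qed
qed

lemma sep:
  assumes G: "ropen G" and H: "ropen H"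
  shows "nu (H \<inter> G) + nus (H - G) \<le> nu H"
proof (rule field_le_epsilon)
  fix e3 :: real assume e3: "0 < e3"
  define e where "e = e3 / 3"
  have e: "e > 0" using e3 by (simp add: e_def)
  define L1 where "L1 = L (\<lambda>_. 1)"
  have L1: "0 \<le> L1" using L_pos[OF one_C] by (simp add: L1_def)
  define \<delta> where "\<delta> = e / (L1 + 1)"
  have \<delta>: "\<delta> > 0" "\<delta> * L1 \<le> e" using e L1 by (auto simp: \<delta>_def field_simps)
  obtain f1 where f1: "f1 \<in> Bs (H \<inter> G)" "nu (H \<inter> G) - e < L f1" using nu_approx[OF e] by blast
  have f1c: "continuous_on \<Omega> f1" and f101: "\<forall>x\<in>\<Omega>. 0 \<le> f1 x \<and> f1 x \<le> 1"
    and f10: "\<forall>x\<in>\<Omega>. x \<notin> H \<inter> G \<longrightarrow> f1 x = 0" using f1 by (auto simp: Bs_def)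
  define W where "W = H - (\<Omega> \<inter> f1 -` {\<delta>..})"
  have W: "ropen W" unfolding W_def ropen_def
    using H f1c by (intro openin_diff continuous_closedin_preimage) (auto simp: ropen_def)
  have HGW: "H - G \<subseteq> W"
  proof
    fix x assume x: "x \<in> H - G"
    then have "x \<in> \<Omega>" using ropen_sub[OF H] by blast
    then have "f1 x = 0" using f10 x by blast
    then show "x \<in> W" using x \<delta> by (auto simp: W_def)
  qed
  obtain f2 where f2: "f2 \<in> Bs W" "nu W - e < L f2" using nu_approx[OF e] by blast
  have f2c: "continuous_on \<Omega> f2" and f201: "\<forall>x\<in>\<Omega>. 0 \<le> f2 x \<and> f2 x \<le> 1"
    and f20: "\<forall>x\<in>\<Omega>. x \<notin> W \<longrightarrow> f2 x = 0" using f2 by (auto simp: Bs_def)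
  define f1' where "f1' x = max (f1 x - \<delta>) 0" for x
  have f1'b: "\<forall>x\<in>\<Omega>. \<bar>f1' x\<bar> \<le> 1"
  proof
    fix x assume "x \<in> \<Omega>"
    then have "0 \<le> f1 x" "f1 x \<le> 1" using f101 by auto
    then show "\<bar>f1' x\<bar> \<le> 1" using \<delta>(1) by (simp add: f1'_def max_def)
  qed
  have f1'C: "f1' \<in> C"
    using f1'b f1c by (intro bdd_C[where B=1]) (auto simp: f1'_def intro!: continuous_intros)
  define h where "h x = f1' x + f2 x" for x
  have hB: "h \<in> Bs H"
    unfolding Bs_def
  proof (intro CollectI conjI ballI impI)
    show "continuous_on \<Omega> h" unfolding h_def f1'_def using f1c f2c by (intro continuous_intros)
    fix x assume x: "x \<in> \<Omega>"
    show "0 \<le> h x" using f201 x by (auto simp: h_def f1'_def)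
    show "h x \<le> 1"
    proof (cases "f1 x \<ge> \<delta>")
      case True
      then have "x \<notin> W" using x by (auto simp: W_def)
      then show ?thesis using f20 f101 x \<delta> by (auto simp: h_def f1'_def)
    next
      case False
      then show ?thesis using f201 x by (auto simp: h_def f1'_def)
    qed
    assume "x \<notin> H"
    moreover have "W \<subseteq> H" by (auto simp: W_def)
    ultimately have "f1 x = 0" "f2 x = 0" using f10 f20 x by auto
    then show "h x = 0" using \<delta>(1) by (simp add: h_def f1'_def)
  qed
  have dC: "(\<lambda>x. \<delta> * 1) \<in> C" using C_scale[OF one_C] by simp
  have "L f1 \<le> L (\<lambda>x. f1' x + \<delta> * 1)"
    by (intro L_mono Bs_C[OF f1(1)] C_add[OF f1'C dC]) (auto simp: f1'_def)
  also have "\<dots> = L f1' + \<delta> * L1" using L_add[OF f1'C dC] L_scale[OF one_C, of \<delta>] by (simp add: L1_def)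
  finally have "L f1 \<le> L f1' + \<delta> * L1" .
  moreover have "L h = L f1' + L f2" unfolding h_def by (rule L_add[OF f1'C Bs_C[OF f2(1)]])
  moreover have "L h \<le> nu H" by (rule nu_ge[OF hB])
  moreover have "nus (H - G) \<le> nu W" by (rule nus_le[OF W HGW])
  ultimately show "nu (H \<inter> G) + nus (H - G) \<le> nu H + e3"
    using f1(2) f2(2) \<delta> by (simp add: e_def)
qed

lemma nue_subadd: "subadditive (Pow \<Omega>) nue"
  using nue_outer unfolding outer_measure_space_def
  by (intro ring_of_sets.countably_subadditive_subadditive[OF ring_of_sets_Pow]) auto

lemma open_lambda:
  assumes G: "ropen G"
  shows "G \<in> lambda_system \<Omega> (Pow \<Omega>) nue"
  unfolding lambda_system_def
proof (intro CollectI conjI ballI)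
  show "G \<in> Pow \<Omega>" using ropen_sub[OF G] by simp
  fix x assume x: "x \<in> Pow \<Omega>"
  have "nue x = nue ((G \<inter> x) \<union> ((\<Omega> - G) \<inter> x))" using x by (metis Int_Diff_Un Int_Un_distrib2 PowD inf.absorb_iff2 sup_commute Diff_partition ropen_sub[OF G]) 
  also have "\<dots> \<le> nue (G \<inter> x) + nue ((\<Omega> - G) \<inter> x)" using x by (intro subadditiveD[OF nue_subadd]) auto
  finally have le: "nue x \<le> nue (G \<inter> x) + nue ((\<Omega> - G) \<inter> x)" .
  have "nus (G \<inter> x) + nus ((\<Omega> - G) \<inter> x) \<le> nus x"
  proof (rule nus_ge)
    show "x \<subseteq> \<Omega>" using x by simp
    fix H assume H: "ropen H" "x \<subseteq> H"
    have "nus (G \<inter> x) \<le> nu (H \<inter> G)" using H G by (intro nus_le) (auto simp: ropen_def openin_Int)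
    moreover have "nus ((\<Omega> - G) \<inter> x) \<le> nus (H - G)" using H ropen_sub[OF H(1)] by (intro nus_mono) auto
    ultimately show "nus (G \<inter> x) + nus ((\<Omega> - G) \<inter> x) \<le> nu H" using sep[OF G H(1)] by linarith
  qed
  then have "nue (G \<inter> x) + nue ((\<Omega> - G) \<inter> x) \<le> nue x"
    unfolding nue_def using x by (subst ennreal_plus[symmetric]) (auto intro!: ennreal_leI nus_nonneg)
  with le show "nue (G \<inter> x) + nue ((\<Omega> - G) \<inter> x) = nue x" by (rule antisym[rotated])
qed

end


context rz begin

lemma Omega_borel: "\<Omega> \<in> sets borel"
proof -
  have "\<Omega> = (\<Union>n::nat. {x\<in>\<Omega>. Z x \<le> real n})"
  proof (intro equalityI subsetI)
    fix x assume "x \<in> \<Omega>"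
    moreover obtain n :: nat where "Z x \<le> real n" using real_arch_simple by blast
    ultimately show "x \<in> (\<Union>n::nat. {x\<in>\<Omega>. Z x \<le> real n})" by blast
  qed auto
  also have "\<dots> \<in> sets borel"
  proof -
    have *: "{x\<in>\<Omega>. Z x \<le> real n} \<in> sets borel" for n :: nat
      using compact_level[of "real n"] by (intro borel_closed compact_imp_closed) auto
    show ?thesis by (rule sets.countable_UN) (use * in auto)
  qed
  finally show ?thesis .
qed

abbreviation "SR \<equiv> sets (restrict_space borel \<Omega>)"

lemma SR_eq: "SR = sigma_sets \<Omega> ((\<inter>) \<Omega> ` {S. open S})"
proof -
  have "SR = (\<inter>) \<Omega> ` sets borel" by (simp add: sets_restrict_space)
  also have "\<dots> = (\<inter>) \<Omega> ` sigma_sets UNIV {S. open S}" by (simp add: sets_borel)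
  also have "\<dots> = sigma_sets \<Omega> ((\<inter>) \<Omega> ` {S. open S})"
    using Omega_borel by (intro sigma_sets_Int) (auto simp: sets_borel)
  finally show ?thesis .
qed

lemma SR_alg: "sigma_algebra \<Omega> SR"
  using sets.sigma_algebra_axioms[of "restrict_space borel \<Omega>"] by (simp add: space_restrict_space)

lemma SR_sub: "SR \<subseteq> lambda_system \<Omega> (Pow \<Omega>) nue"
proof -
  have ms: "measure_space \<Omega> (lambda_system \<Omega> (Pow \<Omega>) nue) nue"
    by (rule sigma_algebra.caratheodory_lemma[OF sigma_algebra_Pow nue_outer])
  then have sa: "sigma_algebra \<Omega> (lambda_system \<Omega> (Pow \<Omega>) nue)" by (simp add: measure_space_def)
  have "(\<inter>) \<Omega> ` {S. open S} \<subseteq> lambda_system \<Omega> (Pow \<Omega>) nue"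
  proof
    fix A assume "A \<in> (\<inter>) \<Omega> ` {S. open S}"
    then have "ropen A" unfolding ropen_def openin_open by blast
    then show "A \<in> lambda_system \<Omega> (Pow \<Omega>) nue" by (rule open_lambda)
  qed
  then show ?thesis unfolding SR_eq by (rule sigma_algebra.sigma_sets_subset[OF sa])
qed

lemma ms_SR: "measure_space \<Omega> SR nue"
proof -
  have ms: "measure_space \<Omega> (lambda_system \<Omega> (Pow \<Omega>) nue) nue"
    by (rule sigma_algebra.caratheodory_lemma[OF sigma_algebra_Pow nue_outer])
  show ?thesis by (rule measure_down[OF ms SR_alg SR_sub])
qed

definition "M = measure_of \<Omega> SR nue"

lemma SR_Pow: "SR \<subseteq> Pow \<Omega>"
  using sets.space_closed[of "restrict_space borel \<Omega>"] by (simp add: space_restrict_space)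

lemma sets_M: "sets M = SR"
  unfolding M_def using SR_Pow sigma_algebra.sigma_sets_eq[OF SR_alg] by (simp add: sets_measure_of)

lemma space_M: "space M = \<Omega>"
  unfolding M_def using SR_Pow by (simp add: space_measure_of)

lemma emeasure_M: "A \<in> SR \<Longrightarrow> emeasure M A = nue A"
  unfolding M_def using ms_SR by (intro emeasure_measure_of_sigma[OF SR_alg]) (auto simp: measure_space_def)

lemma measure_M: "A \<in> SR \<Longrightarrow> measure M A = nus A"
  using emeasure_M[of A] SR_Pow nus_nonneg by (auto simp: measure_def nue_def)

lemma finite_M: "finite_measure M"
proof (rule finite_measureI)
  have "\<Omega> \<in> SR" using sets.top[of "restrict_space borel \<Omega>"] by (simp add: space_restrict_space)
  then show "emeasure M (space M) \<noteq> \<infinity>" by (simp add: space_M emeasure_M nue_def)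
qed

lemma ropen_SR: "ropen G \<Longrightarrow> G \<in> SR"
  unfolding SR_eq ropen_def openin_open by (auto intro: sigma_sets.Basic)

lemma closedin_SR: "closedin (top_of_set \<Omega>) F \<Longrightarrow> F \<in> SR"
proof -
  assume F: "closedin (top_of_set \<Omega>) F"
  then have "ropen (\<Omega> - F)" unfolding ropen_def by (simp add: closedin_def)
  then have "\<Omega> - (\<Omega> - F) \<in> SR"
    using sets.compl_sets[of "\<Omega> - F" "restrict_space borel \<Omega>"] ropen_SR by (simp add: space_restrict_space)
  moreover have "\<Omega> - (\<Omega> - F) = F" using closedin_subset[OF F] by auto
  ultimately show ?thesis by simp
qed

end


lemma tele:
  fixes y :: real
  shows "(\<Sum>j<n. min (max (y - real j) 0) 1) = min (max y 0) (real n)"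
proof (induction n)
  case 0 then show ?case by simp
next
  case (Suc n)
  have "(\<Sum>j<Suc n. min (max (y - real j) 0) 1) = min (max y 0) (real n) + min (max (y - real n) 0) 1"
    using Suc by simp
  also have "\<dots> = min (max y 0) (real (Suc n))" by (simp add: min_def max_def)
  finally show ?case .
qed

context rz begin

lemma up_bound: "ropen G \<Longrightarrow> h \<in> Bs G \<Longrightarrow> L h \<le> nus G"
  using nu_ge nus_open by simp

lemma M_meas: "continuous_on \<Omega> f \<Longrightarrow> f \<in> borel_measurable M"
  using borel_measurable_continuous_on_restrict measurable_cong_sets[OF sets_M refl] by blast

lemma low_bound:
  assumes F: "closedin (top_of_set \<Omega>) F" and hC: "h \<in> C" and h01: "\<forall>x\<in>\<Omega>. 0 \<le> h x \<and> h x \<le> 1"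
    and h1: "\<forall>x\<in>F. h x = 1"
  shows "nus F \<le> L h"
proof (rule field_le_epsilon)
  fix e :: real assume e: "0 < e"
  define L1 where "L1 = L (\<lambda>_. 1)"
  have L1: "0 \<le> L1" using L_pos[OF one_C] by (simp add: L1_def)
  define \<epsilon> where "\<epsilon> = min (1/2) (e / (L1 + 1))"
  have \<epsilon>: "0 < \<epsilon>" "\<epsilon> \<le> 1/2" "\<epsilon> * L1 \<le> e"
  proof -
    show "0 < \<epsilon>" using e L1 by (auto simp: \<epsilon>_def)
    show "\<epsilon> \<le> 1/2" unfolding \<epsilon>_def by (rule min.cobounded1)
    have "\<epsilon> * L1 \<le> e / (L1 + 1) * L1" using L1 by (intro mult_right_mono) (auto simp: \<epsilon>_def)
    also have "\<dots> \<le> e" using e L1 by (simp add: field_simps)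
    finally show "\<epsilon> * L1 \<le> e" .
  qed
  have FO: "F \<subseteq> \<Omega>" using closedin_subset[OF F] by simp
  define V where "V = \<Omega> \<inter> h -` {1 - \<epsilon><..}"
  have hc: "continuous_on \<Omega> h" by (rule C_cont[OF hC])
  have V: "ropen V" unfolding V_def ropen_def
    by (rule continuous_openin_preimage[OF hc, of UNIV]) auto
  have FV: "F \<subseteq> V" using h1 FO \<epsilon> by (auto simp: V_def)
  have sC: "(\<lambda>x. (1 / (1 - \<epsilon>)) * h x) \<in> C" by (rule C_scale[OF hC])
  have "nu V \<le> (1 / (1 - \<epsilon>)) * L h"
  proof (rule nu_le)
    fix g assume g: "g \<in> Bs V"
    have "L g \<le> L (\<lambda>x. (1 / (1 - \<epsilon>)) * h x)"
    proof (rule L_mono[OF Bs_C[OF g] sC], intro ballI)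
      fix x assume x: "x \<in> \<Omega>"
      show "g x \<le> 1 / (1 - \<epsilon>) * h x"
      proof (cases "x \<in> V")
        case True
        then have "1 - \<epsilon> < h x" by (simp add: V_def)
        then have "1 \<le> 1 / (1 - \<epsilon>) * h x" using \<epsilon> by (simp add: field_simps)
        then show ?thesis using g x by (auto simp: Bs_def)
      next
        case False
        then have "g x = 0" using g x by (auto simp: Bs_def)
        then show ?thesis using h01 x \<epsilon> by auto
      qed
    qed
    then show "L g \<le> (1 / (1 - \<epsilon>)) * L h" using L_scale[OF hC, of "1 / (1 - \<epsilon>)"] by linarith
  qed
  moreover have "nus F \<le> nu V" by (rule nus_le[OF V FV])
  ultimately have A: "nus F \<le> (1 / (1 - \<epsilon>)) * L h" by linarith
  have "nus F * (1 - \<epsilon>) \<le> (1 / (1 - \<epsilon>)) * L h * (1 - \<epsilon>)"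
    using A \<epsilon> by (intro mult_right_mono) auto
  also have "\<dots> = L h" using \<epsilon> by simp
  finally have B: "nus F * (1 - \<epsilon>) \<le> L h" .
  have "nus F \<le> L1" using nus_le[OF ropen_Omega FO] nu_Omega by (simp add: L1_def)
  then have Cc: "\<epsilon> * nus F \<le> \<epsilon> * L1" using \<epsilon> by (intro mult_left_mono) auto
  have D: "nus F * (1 - \<epsilon>) = nus F - \<epsilon> * nus F" by (simp add: algebra_simps)
  have "nus F \<le> L h + \<epsilon> * L1" using B Cc D by linarith
  then show "nus F \<le> L h + e" using \<epsilon> by linarith
qed

lemma int01:
  assumes fC: "f \<in> C" and f01: "\<forall>x\<in>\<Omega>. 0 \<le> f x \<and> f x \<le> 1"
  shows "integrable M f \<and> integral\<^sup>L M f = L f"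
proof -
  have fc: "continuous_on \<Omega> f" by (rule C_cont[OF fC])
  have fm: "f \<in> borel_measurable M" by (rule M_meas[OF fc])
  have fin: "finite_measure M" by (rule finite_M)
  have intf: "integrable M f"
    using fin fm f01 by (intro finite_measure.integrable_const_bound[where B=1]) (auto simp: space_M)
  define L1 where "L1 = L (\<lambda>_. 1)"
  have L1: "0 \<le> L1" using L_pos[OF one_C] by (simp add: L1_def)
  have bound: "\<bar>L f - integral\<^sup>L M f\<bar> \<le> L1 / real N" if N: "N > 0" for N :: nat
  proof -
    define g where "g j x = min (max (real N * f x - real j) 0) 1" for j :: nat and x
    define Fs where "Fs j = \<Omega> \<inter> (\<lambda>x. real N * f x) -` {real j + 1..}" for j :: nat
    define Os where "Os j = \<Omega> \<inter> (\<lambda>x. real N * f x) -` {real j<..}" for j :: nat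
    have Nfc: "continuous_on \<Omega> (\<lambda>x. real N * f x)" using fc by (intro continuous_intros)
    have gc: "continuous_on \<Omega> (g j)" for j unfolding g_def using fc by (intro continuous_intros)
    have g01: "0 \<le> g j x \<and> g j x \<le> 1" for j x by (auto simp: g_def)
    have gC: "g j \<in> C" for j using gc g01 by (intro bdd_C[where B=1]) auto
    have Os: "ropen (Os j)" for j unfolding Os_def ropen_def
      by (rule continuous_openin_preimage[OF Nfc, of UNIV]) auto
    have Fs: "closedin (top_of_set \<Omega>) (Fs j)" for j unfolding Fs_def
      by (rule continuous_closedin_preimage[OF Nfc]) auto
    have FsO: "Fs j \<subseteq> \<Omega>" "Os j \<subseteq> \<Omega>" for j by (auto simp: Fs_def Os_def)
    have gB: "g j \<in> Bs (Os j)" for j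
      unfolding Bs_def using gc g01 by (auto simp: g_def Os_def)
    have g1: "\<forall>x\<in>Fs j. g j x = 1" for j by (auto simp: g_def Fs_def)
    define a where "a j = nus (Fs j)" for j
    define b where "b j = nus (Os j)" for j
    have Lg: "a j \<le> L (g j) \<and> L (g j) \<le> b j" for j
      unfolding a_def b_def using low_bound[OF Fs gC] g01 g1 up_bound[OF Os gB] by auto
    have intg: "integrable M (g j)" for j
      using fin M_meas[OF gc] g01 by (intro finite_measure.integrable_const_bound[where B=1]) auto
    have ig: "a j \<le> integral\<^sup>L M (g j) \<and> integral\<^sup>L M (g j) \<le> b j" for j
    proof
      have FsSR: "Fs j \<in> SR" by (rule closedin_SR[OF Fs])
      have OsSR: "Os j \<in> SR" by (rule ropen_SR[OF Os])
      have fin_e: "emeasure M A < \<infinity>" for A using finite_measure.emeasure_finite[OF fin, of A] by (simp add: top.not_eq_extremum)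
      have "a j = integral\<^sup>L M (indicator (Fs j))"
        using FsSR FsO by (simp add: a_def measure_M space_M Int_absorb2)
      also have "\<dots> \<le> integral\<^sup>L M (g j)"
        using FsSR intg g01 g1 fin_e by (intro integral_mono integrable_real_indicator) (auto simp: sets_M split: split_indicator)
      finally show "a j \<le> integral\<^sup>L M (g j)" .
      have "integral\<^sup>L M (g j) \<le> integral\<^sup>L M (indicator (Os j))"
        using OsSR intg g01 fin_e by (intro integral_mono integrable_real_indicator)
          (auto simp: sets_M space_M g_def Os_def split: split_indicator)
      also have "\<dots> = b j"
        using OsSR FsO by (simp add: b_def measure_M space_M Int_absorb2)
      finally show "integral\<^sup>L M (g j) \<le> b j" .
    qed
    have fsum: "\<forall>x\<in>\<Omega>. f x = (1 / real N) * (\<Sum>j<N. g j x)"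
    proof
      fix x assume x: "x \<in> \<Omega>"
      have "(\<Sum>j<N. g j x) = min (max (real N * f x) 0) (real N)" unfolding g_def by (rule tele)
      also have "\<dots> = real N * f x"
      proof -
        have "0 \<le> real N * f x" "real N * f x \<le> real N" using f01 x N by (auto simp: mult_le_cancel_left1)
        then show ?thesis by (simp add: min_def max_def)
      qed
      finally show "f x = (1 / real N) * (\<Sum>j<N. g j x)" using N by simp
    qed
    have sumC: "(\<lambda>x. \<Sum>j<N. g j x) \<in> C" and Lsum: "L (\<lambda>x. \<Sum>j<N. g j x) = (\<Sum>j<N. L (g j))"
      using L_sum[of "{..<N}" g] gC by auto
    have "L f = L (\<lambda>x. (1 / real N) * (\<Sum>j<N. g j x))"
      using fsum by (intro L_cong fC C_scale sumC) auto
    also have "\<dots> = (1 / real N) * (\<Sum>j<N. L (g j))" by (simp only: L_scale[OF sumC] Lsum)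
    finally have Lf: "L f = (1 / real N) * (\<Sum>j<N. L (g j))" .
    have "integral\<^sup>L M f = integral\<^sup>L M (\<lambda>x. (1 / real N) * (\<Sum>j<N. g j x))"
      using fsum by (intro Bochner_Integration.integral_cong) (auto simp: space_M)
    also have "\<dots> = (1 / real N) * (\<Sum>j<N. integral\<^sup>L M (g j))"
      using intg by (simp add: Bochner_Integration.integral_sum)
    finally have If: "integral\<^sup>L M f = (1 / real N) * (\<Sum>j<N. integral\<^sup>L M (g j))" .
    have "\<bar>(\<Sum>j<N. L (g j)) - (\<Sum>j<N. integral\<^sup>L M (g j))\<bar> \<le> (\<Sum>j<N. \<bar>L (g j) - integral\<^sup>L M (g j)\<bar>)"
      by (simp add: sum_subtractf[symmetric] sum_abs)
    also have "\<dots> \<le> (\<Sum>j<N. b j - a j)"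
    proof (intro sum_mono)
      fix j show "\<bar>L (g j) - integral\<^sup>L M (g j)\<bar> \<le> b j - a j"
        using Lg[of j] ig[of j] by (auto simp: abs_le_iff)
    qed
    also have "\<dots> \<le> (\<Sum>j<N. b j - b (Suc j))"
    proof (intro sum_mono)
      fix j
      have "Os (Suc j) \<subseteq> Fs j" by (auto simp: Os_def Fs_def)
      then have "b (Suc j) \<le> a j" unfolding a_def b_def using FsO by (intro nus_mono) auto
      then show "b j - a j \<le> b j - b (Suc j)" by simp
    qed
    also have "\<dots> = b 0 - b N" by (rule sum_lessThan_telescope')
    also have "\<dots> \<le> L1"
    proof -
      have "b 0 \<le> L1" unfolding b_def using nus_le[OF ropen_Omega FsO(2)] nu_Omega by (simp add: L1_def)
      moreover have "0 \<le> b N" unfolding b_def using nus_nonneg[OF FsO(2)] .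
      ultimately show ?thesis by simp
    qed
    finally have "\<bar>(\<Sum>j<N. L (g j)) - (\<Sum>j<N. integral\<^sup>L M (g j))\<bar> \<le> L1" .
    moreover have "L f - integral\<^sup>L M f = ((\<Sum>j<N. L (g j)) - (\<Sum>j<N. integral\<^sup>L M (g j))) / real N"
      unfolding Lf If by (simp add: diff_divide_distrib)
    ultimately show ?thesis using N by (simp add: abs_divide divide_right_mono)
  qed
  have "L f = integral\<^sup>L M f"
  proof (rule ccontr)
    assume ne: "L f \<noteq> integral\<^sup>L M f"
    define d where "d = \<bar>L f - integral\<^sup>L M f\<bar>"
    have d: "d > 0" using ne by (simp add: d_def)
    obtain N :: nat where N: "L1 / d < real N" using reals_Archimedean2 by blast
    have Npos: "N > 0" using N L1 d by (smt (verit) divide_nonneg_pos of_nat_0_less_iff)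
    have "d \<le> L1 / real N" using bound[OF Npos] by (simp add: d_def)
    then have "d * real N \<le> L1" using Npos by (simp add: field_simps)
    moreover have "L1 < d * real N" using N d by (simp add: field_simps)
    ultimately show False by simp
  qed
  then show ?thesis using intf by simp
qed

end


context rz begin

lemma int_bdd:
  assumes fC: "f \<in> C" and f: "\<forall>x\<in>\<Omega>. 0 \<le> f x \<and> f x \<le> m" and m: "m > 0"
  shows "integrable M f \<and> integral\<^sup>L M f = L f"
proof -
  define g where "g x = (1 / m) * f x" for x
  have gC: "g \<in> C" unfolding g_def by (rule C_scale[OF fC])
  have g01: "\<forall>x\<in>\<Omega>. 0 \<le> g x \<and> g x \<le> 1" using f m by (auto simp: g_def field_simps)
  have ig: "integrable M g" "integral\<^sup>L M g = L g" using int01[OF gC g01] by auto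
  have fg: "f = (\<lambda>x. m * g x)" using m by (auto simp: g_def fun_eq_iff)
  have "L f = m * L g" unfolding fg by (rule L_scale[OF gC])
  then show ?thesis unfolding fg using ig by simp
qed

lemma int_nonneg:
  assumes XC: "X \<in> C" and X0: "\<forall>x\<in>\<Omega>. 0 \<le> X x"
  shows "integrable M X \<and> integral\<^sup>L M X = L X"
proof -
  obtain c0 where c0: "c0 \<ge> 0" "\<forall>\<omega>\<in>\<Omega>. \<bar>X \<omega>\<bar> \<le> c0 * Z \<omega>" using CZ_bound[OF XC Z_ge1] by blast
  define c where "c = c0 + 1"
  have c: "c > 0" "\<forall>\<omega>\<in>\<Omega>. X \<omega> \<le> c * Z \<omega>"
  proof -
    show "c > 0" using c0 by (simp add: c_def)
    show "\<forall>\<omega>\<in>\<Omega>. X \<omega> \<le> c * Z \<omega>"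
    proof
      fix x assume x: "x \<in> \<Omega>"
      have "X x \<le> c0 * Z x" using c0 x by force
      also have "\<dots> \<le> c * Z x" using Z_ge1 x by (intro mult_right_mono) (auto simp: c_def)
      finally show "X x \<le> c * Z x" .
    qed
  qed
  define Xn where "Xn n x = min (X x) (real n)" for n x
  have XnC: "Xn n \<in> C" for n unfolding Xn_def by (rule C_min[OF XC])
  have Xnb: "\<forall>x\<in>\<Omega>. 0 \<le> Xn n x \<and> Xn n x \<le> real n + 1" for n using X0 by (auto simp: Xn_def)
  have iXn: "integrable M (Xn n) \<and> integral\<^sup>L M (Xn n) = L (Xn n)" for n
    by (rule int_bdd[OF XnC Xnb]) simp
  define T where "T n x = max (X x - real n) 0" for n x
  have TC: "T n \<in> C" for n unfolding T_def using C_max0[OF C_diff[OF XC bdd_C[of "\<lambda>_. real n" "real n"]]] by simp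
  have LXn: "L (Xn n) = L X - L (T n)" for n
  proof -
    have "L (Xn n) = L (\<lambda>x. X x - T n x)"
      by (intro L_cong XnC C_diff[OF XC TC]) (auto simp: Xn_def T_def)
    also have "\<dots> = L X - L (T n)" by (rule L_diff[OF XC TC])
    finally show ?thesis .
  qed
  have PC: "(\<lambda>\<omega>. max (Z \<omega> - z) 0) \<in> C" for z by (rule CZ_Zpart[OF Z_cont Z_ge1])
  have Tb: "0 \<le> L (T n) \<and> L (T n) \<le> c * L (\<lambda>\<omega>. max (Z \<omega> - real n / c) 0)" for n
  proof
    show "0 \<le> L (T n)" using L_pos[OF TC] by (auto simp: T_def)
    have "L (T n) \<le> L (\<lambda>x. c * max (Z x - real n / c) 0)"
    proof (intro L_mono TC C_scale[OF PC] ballI)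
      fix x assume x: "x \<in> \<Omega>"
      have "X x - real n \<le> c * (Z x - real n / c)" using c x by (auto simp: right_diff_distrib)
      moreover have "c * (Z x - real n / c) \<le> c * max (Z x - real n / c) 0" using c by (intro mult_left_mono) auto
      moreover have "0 \<le> c * max (Z x - real n / c) 0" using c by auto
      ultimately show "T n x \<le> c * max (Z x - real n / c) 0" by (simp add: T_def)
    qed
    also have "\<dots> = c * L (\<lambda>\<omega>. max (Z \<omega> - real n / c) 0)" by (rule L_scale[OF PC])
    finally show "L (T n) \<le> c * L (\<lambda>\<omega>. max (Z \<omega> - real n / c) 0)" .
  qed
  have lim_nc: "filterlim (\<lambda>n. real n / c) at_top sequentially"
  proof -
    have "filterlim (\<lambda>n. (1 / c) * real n) at_top sequentially"
      using c by (intro filterlim_tendsto_pos_mult_at_top[OF tendsto_const _ filterlim_real_sequentially]) auto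
    then show ?thesis by simp
  qed
  have "(\<lambda>n. L (\<lambda>\<omega>. max (Z \<omega> - real n / c) 0)) \<longlonglongrightarrow> 0"
    using filterlim_compose[OF L_tight lim_nc] .
  then have "(\<lambda>n. c * L (\<lambda>\<omega>. max (Z \<omega> - real n / c) 0)) \<longlonglongrightarrow> c * 0"
    by (intro tendsto_mult tendsto_const)
  then have up: "(\<lambda>n. c * L (\<lambda>\<omega>. max (Z \<omega> - real n / c) 0)) \<longlonglongrightarrow> 0" by simp
  have "(\<lambda>n. L (T n)) \<longlonglongrightarrow> 0"
  proof (rule tendsto_sandwich[OF _ _ tendsto_const up])
    show "eventually (\<lambda>n. 0 \<le> L (T n)) sequentially" using Tb by (intro always_eventually) blast
    show "eventually (\<lambda>n. L (T n) \<le> c * L (\<lambda>\<omega>. max (Z \<omega> - real n / c) 0)) sequentially"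
      using Tb by (intro always_eventually) blast
  qed
  then have "(\<lambda>n. L X - L (T n)) \<longlonglongrightarrow> L X - 0" by (intro tendsto_diff tendsto_const)
  then have ilim: "(\<lambda>n. integral\<^sup>L M (Xn n)) \<longlonglongrightarrow> L X" using iXn LXn by simp
  have mono: "AE x in M. mono (\<lambda>n. Xn n x)"
    by (intro AE_I2) (auto simp: mono_def Xn_def)
  have pos: "AE x in M. 0 \<le> Xn n x" for n
    using Xnb by (intro AE_I2) (auto simp: space_M)
  have lim: "AE x in M. (\<lambda>n. Xn n x) \<longlonglongrightarrow> X x"
  proof (intro AE_I2)
    fix x
    obtain N :: nat where "X x \<le> real N" using real_arch_simple by blast
    then have "eventually (\<lambda>n. Xn n x = X x) sequentially"
      unfolding eventually_sequentially by (intro exI[of _ N]) (auto simp: Xn_def)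
    then show "(\<lambda>n. Xn n x) \<longlonglongrightarrow> X x" by (rule tendsto_eventually[THEN tendsto_cong[THEN iffD1, rotated]])
      (simp add: eq_commute)
  qed
  have Xm: "X \<in> borel_measurable M" by (rule M_meas[OF C_cont[OF XC]])
  show ?thesis
    using integral_monotone_convergence_nonneg[of M Xn, OF _ mono pos lim ilim Xm] iXn by auto
qed

lemma int_C:
  assumes XC: "X \<in> C"
  shows "integrable M X \<and> integral\<^sup>L M X = L X"
proof -
  define P where "P x = max (X x) 0" for x
  define N where "N x = max (- X x) 0" for x
  have PC: "P \<in> C" unfolding P_def by (rule C_max0[OF XC])
  have NC: "N \<in> C" unfolding N_def by (rule C_max0[OF C_minus[OF XC]])
  have iP: "integrable M P \<and> integral\<^sup>L M P = L P" by (rule int_nonneg[OF PC]) (auto simp: P_def)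
  have iN: "integrable M N \<and> integral\<^sup>L M N = L N" by (rule int_nonneg[OF NC]) (auto simp: N_def)
  have eq: "\<forall>x\<in>\<Omega>. X x = P x - N x" by (auto simp: P_def N_def)
  have LX: "L X = L P - L N"
    using L_cong[OF XC C_diff[OF PC NC]] eq L_diff[OF PC NC] by simp
  have iPN: "integrable M (\<lambda>x. P x - N x)" using iP iN by auto
  have "integrable M X \<longleftrightarrow> integrable M (\<lambda>x. P x - N x)"
    using eq by (intro Bochner_Integration.integrable_cong) (auto simp: space_M)
  then have "integrable M X" using iPN by simp
  moreover have "integral\<^sup>L M X = integral\<^sup>L M (\<lambda>x. P x - N x)"
    using eq by (intro Bochner_Integration.integral_cong) (auto simp: space_M)
  moreover have "\<dots> = integral\<^sup>L M P - integral\<^sup>L M N" using iP iN by (intro Bochner_Integration.integral_diff) auto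
  ultimately show ?thesis using iP iN LX by simp
qed

lemma M_caZ: "M \<in> caZ \<Omega> Z"
  unfolding caZ_def
proof (intro CollectI conjI)
  show "space M = \<Omega>" by (rule space_M)
  show "sets M = SR" by (rule sets_M)
  have "integrable M Z" using int_C[OF CZ_Z[OF Z_cont Z_ge1]] by simp
  then have "(\<integral>\<^sup>+ x. ennreal (Z x) \<partial>M) \<noteq> \<infinity>" by (rule integrableD(2))
  then show "(\<integral>\<^sup>+ x. ennreal (Z x) \<partial>M) < \<infinity>" by (simp add: top.not_eq_extremum)
qed

lemma riesz_main: "\<exists>\<mu>\<in>caZ \<Omega> Z. \<forall>X\<in>C. pairing X \<mu> = L X"
  using M_caZ int_C by (auto simp: pairing_def)

end
lemma riesz:
  fixes \<Omega> :: "'a::metric_space set" and Z :: "'a \<Rightarrow> real" and L :: "('a \<Rightarrow> real) \<Rightarrow> real"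
  assumes \<Omega>_ne: "\<Omega> \<noteq> {}"
    and Z_ge1: "\<forall>\<omega>\<in>\<Omega>. 1 \<le> Z \<omega>"
    and Z_cont: "continuous_on \<Omega> Z"
    and Z_compact: "\<forall>z::real. 0 \<le> z \<longrightarrow> compact {\<omega>\<in>\<Omega>. Z \<omega> \<le> z}"
    and L_add: "\<And>X Y. X \<in> CZ \<Omega> Z \<Longrightarrow> Y \<in> CZ \<Omega> Z \<Longrightarrow> L (\<lambda>\<omega>. X \<omega> + Y \<omega>) = L X + L Y"
    and L_scale: "\<And>X r. X \<in> CZ \<Omega> Z \<Longrightarrow> L (\<lambda>\<omega>. r * X \<omega>) = r * L X"
    and L_pos: "\<And>X. X \<in> CZ \<Omega> Z \<Longrightarrow> (\<forall>\<omega>\<in>\<Omega>. 0 \<le> X \<omega>) \<Longrightarrow> 0 \<le> L X"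
    and L_tight: "((\<lambda>z. L (\<lambda>\<omega>. max (Z \<omega> - z) 0)) \<longlongrightarrow> 0) at_top"
  shows "\<exists>\<mu>\<in>caZ \<Omega> Z. \<forall>X\<in>CZ \<Omega> Z. pairing X \<mu> = L X"

proof -
  interpret rz \<Omega> Z L by unfold_locales (use assms in auto)
  show ?thesis by (rule riesz_main)
qed

lemma part2:
  fixes \<Omega> :: "'a::metric_space set" and Z :: "'a \<Rightarrow> real" and \<psi> :: "('a \<Rightarrow> real) \<Rightarrow> real"
  assumes \<Omega>_ne: "\<Omega> \<noteq> {}"
    and Z_ge1: "\<forall>\<omega>\<in>\<Omega>. 1 \<le> Z \<omega>"
    and Z_cont: "continuous_on \<Omega> Z"
    and Z_compact: "\<forall>z::real. 0 \<le> z \<longrightarrow> compact {\<omega>\<in>\<Omega>. Z \<omega> \<le> z}"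
    and hyp: "\<forall>n::nat. ((\<lambda>z::real. \<psi> (\<lambda>\<omega>. real n * max (Z \<omega> - z) 0)) \<longlongrightarrow> \<psi> (\<lambda>\<omega>. 0)) at_top"
  shows "compactin (weak_topology_caZ \<Omega> Z) {\<mu>\<in>caZ \<Omega> Z. conj_CZ \<Omega> Z \<psi> \<mu> \<le> ereal a}"
proof -
  define C where "C = CZ \<Omega> Z"
  define S where "S = {\<mu>\<in>caZ \<Omega> Z. conj_CZ \<Omega> Z \<psi> \<mu> \<le> ereal a}"
  define F where "F \<mu> = restrict (\<lambda>X. pairing X \<mu>) C" for \<mu>
  define T where "T = powertop_real C"
  have topT: "topspace T = (\<Pi>\<^sub>E X\<in>C. UNIV)" by (simp add: T_def)
  have F_top: "F \<mu> \<in> topspace T" for \<mu> by (simp add: topT F_def)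
  have FX: "X \<in> C \<Longrightarrow> F \<mu> X = pairing X \<mu>" for X \<mu> by (simp add: F_def)
  have proj: "X \<in> C \<Longrightarrow> continuous_map T euclideanreal (\<lambda>h. h X)" for X
    unfolding T_def by (rule continuous_map_product_projection)
  have S_le: "pairing X \<mu> - \<psi> X \<le> a" if "\<mu> \<in> S" "X \<in> C" for X \<mu>
  proof -
    have "ereal (pairing X \<mu> - \<psi> X) \<le> conj_CZ \<Omega> Z \<psi> \<mu>"
      unfolding conj_CZ_def using that(2) by (intro SUP_upper) (simp add: C_def)
    also have "\<dots> \<le> ereal a" using that(1) by (simp add: S_def)
    finally show ?thesis by simp
  qed
  have SZ: "S \<subseteq> caZ \<Omega> Z" by (auto simp: S_def)
  have ZC: "Z \<in> C" unfolding C_def by (rule CZ_Z[OF Z_cont Z_ge1])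
  define B where "B = max 0 (a + \<psi> Z)"
  define cc where "cc X = (SOME c. c \<ge> 0 \<and> (\<forall>\<omega>\<in>\<Omega>. \<bar>X \<omega>\<bar> \<le> c * Z \<omega>))" for X
  have cc: "cc X \<ge> 0 \<and> (\<forall>\<omega>\<in>\<Omega>. \<bar>X \<omega>\<bar> \<le> cc X * Z \<omega>)" if XC: "X \<in> C" for X
  proof -
    obtain c where "c \<ge> 0" "\<forall>\<omega>\<in>\<Omega>. \<bar>X \<omega>\<bar> \<le> c * Z \<omega>" using CZ_bound[OF XC[unfolded C_def] Z_ge1] by blast
    then show ?thesis unfolding cc_def by (rule someI[where P="\<lambda>c. c \<ge> 0 \<and> (\<forall>\<omega>\<in>\<Omega>. \<bar>X \<omega>\<bar> \<le> c * Z \<omega>)", OF conjI])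
  qed
  define K where "K X = {- (cc X * B) .. cc X * B}" for X
  have FS_K: "F ` S \<subseteq> (\<Pi>\<^sub>E X\<in>C. K X)"
  proof
    fix h assume "h \<in> F ` S"
    then obtain \<mu> where \<mu>: "\<mu> \<in> S" "h = F \<mu>" by blast
    have muZ: "pairing Z \<mu> \<le> B" using S_le[OF \<mu>(1) ZC] by (simp add: B_def)
    have "h X \<in> K X" if X: "X \<in> C" for X
    proof -
      have "\<bar>pairing X \<mu>\<bar> \<le> cc X * pairing Z \<mu>"
        using \<mu>(1) SZ cc[OF X] X by (intro caZ_pairing_bound[OF _ Z_cont Z_ge1]) (auto simp: C_def)
      also have "\<dots> \<le> cc X * B" using cc[OF X] muZ by (intro mult_left_mono) auto
      finally show ?thesis using \<mu>(2) X by (simp add: K_def FX abs_le_iff)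
    qed
    then show "h \<in> (\<Pi>\<^sub>E X\<in>C. K X)" using \<mu>(2) by (auto simp: F_def)
  qed
  have cK: "compactin T (\<Pi>\<^sub>E X\<in>C. K X)"
    unfolding T_def compactin_PiE by (auto simp: K_def compactin_euclidean_iff)
  have clos: "g L \<le> 0" if g: "continuous_map T euclideanreal g" and le: "\<And>\<mu>. \<mu> \<in> S \<Longrightarrow> g (F \<mu>) \<le> 0"
    and L: "L \<in> T closure_of (F ` S)" for g L
  proof (rule ccontr)
    assume "\<not> g L \<le> 0"
    moreover have "openin T {h \<in> topspace T. g h \<in> {0<..}}"
      by (rule openin_continuous_map_preimage[OF g]) simp
    moreover have "L \<in> topspace T" using L by (simp add: in_closure_of)
    ultimately obtain y where "y \<in> F ` S" "y \<in> {h \<in> topspace T. g h \<in> {0<..}}"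
      using L unfolding in_closure_of by (metis (mono_tags, lifting) greaterThan_iff mem_Collect_eq not_le)
    then show False using le by fastforce
  qed
  have closedFS: "closedin T (F ` S)"
    unfolding closure_of_subset_eq[symmetric]
  proof
    show "F ` S \<subseteq> topspace T" using F_top by auto
    show "T closure_of F ` S \<subseteq> F ` S"
    proof
      fix L assume L: "L \<in> T closure_of F ` S"
      have Ltop: "L \<in> topspace T" using L by (simp add: in_closure_of)
      have eq: "L W = L X + L Y" if "X \<in> C" "Y \<in> C" "W \<in> C" "\<And>\<mu>. \<mu> \<in> S \<Longrightarrow> pairing W \<mu> = pairing X \<mu> + pairing Y \<mu>" for W X Y
      proof -
        have c1: "continuous_map T euclideanreal (\<lambda>h. h W - h X - h Y)"
          using that(1-3) by (intro continuous_map_diff proj)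
        have c2: "continuous_map T euclideanreal (\<lambda>h. - (h W - h X - h Y))"
          using c1 by (rule continuous_map_minus)
        have "L W - L X - L Y \<le> 0"
          using clos[OF c1 _ L] that by (auto simp: FX)
        moreover have "- (L W - L X - L Y) \<le> 0"
          using clos[OF c2 _ L] that by (auto simp: FX)
        ultimately show ?thesis by linarith
      qed
      have intg: "\<mu> \<in> S \<Longrightarrow> X \<in> C \<Longrightarrow> integrable \<mu> X" for \<mu> X
        using SZ caZ_integrable[OF _ Z_cont Z_ge1] by (auto simp: C_def)
      have L_add: "L (\<lambda>\<omega>. X \<omega> + Y \<omega>) = L X + L Y" if "X \<in> C" "Y \<in> C" for X Y
        using that CZ_add[OF _ _ Z_ge1] intg
        by (intro eq) (auto simp: C_def pairing_def)
      have L_scale: "L (\<lambda>\<omega>. r * X \<omega>) = r * L X" if "X \<in> C" for X r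
      proof -
        have XC': "(\<lambda>\<omega>. r * X \<omega>) \<in> C" using that CZ_scale[OF _ Z_ge1] by (auto simp: C_def)
        have c1: "continuous_map T euclideanreal (\<lambda>h. h (\<lambda>\<omega>. r * X \<omega>) - r * h X)"
          using that XC' by (intro continuous_map_diff continuous_map_real_mult proj continuous_map_const[THEN iffD2]) auto
        have c2: "continuous_map T euclideanreal (\<lambda>h. - (h (\<lambda>\<omega>. r * X \<omega>) - r * h X))"
          using c1 by (rule continuous_map_minus)
        have "L (\<lambda>\<omega>. r * X \<omega>) - r * L X \<le> 0"
          using clos[OF c1 _ L] that XC' by (auto simp: FX pairing_def)
        moreover have "- (L (\<lambda>\<omega>. r * X \<omega>) - r * L X) \<le> 0"
          using clos[OF c2 _ L] that XC' by (auto simp: FX pairing_def)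
        ultimately show ?thesis by linarith
      qed
      have L_pos: "0 \<le> L X" if "X \<in> C" "\<forall>\<omega>\<in>\<Omega>. 0 \<le> X \<omega>" for X
      proof -
        have "- L X \<le> 0"
        proof (rule clos[of "\<lambda>h. - h X", OF _ _ L])
          show "continuous_map T euclideanreal (\<lambda>h. - h X)" using proj that by (intro continuous_map_minus) auto
          fix \<mu> assume "\<mu> \<in> S"
          then have "space \<mu> = \<Omega>" using SZ by (auto simp: caZ_def)
          then have "0 \<le> pairing X \<mu>" unfolding pairing_def using that by (intro Bochner_Integration.integral_nonneg) auto
          then show "- F \<mu> X \<le> 0" using that by (simp add: FX)
        qed
        then show ?thesis by simp
      qed
      have L_le: "L X - \<psi> X \<le> a" if "X \<in> C" for X
      proof -
        have c1: "continuous_map T euclideanreal (\<lambda>h. h X - \<psi> X - a)"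
          using that by (intro continuous_map_diff proj continuous_map_const[THEN iffD2]) auto
        have "L X - \<psi> X - a \<le> 0"
          using clos[OF c1 _ L] that S_le by (auto simp: FX)
        then show ?thesis by simp
      qed
      have L_tight: "((\<lambda>z. L (\<lambda>\<omega>. max (Z \<omega> - z) 0)) \<longlongrightarrow> 0) at_top"
        unfolding tendsto_iff
      proof (intro allI impI)
        fix e :: real assume e: "e > 0"
        obtain n :: nat where n: "(\<bar>a + \<psi> (\<lambda>\<omega>. 0)\<bar> + 1) / e < real n" using reals_Archimedean2 by blast
        have npos: "real n > 0" using n e by (smt (verit) divide_pos_pos)
        have ne: "\<bar>a + \<psi> (\<lambda>\<omega>. 0)\<bar> + 1 < e * real n" using n e by (simp add: divide_less_eq mult.commute)
        have "eventually (\<lambda>z. \<psi> (\<lambda>\<omega>. real n * max (Z \<omega> - z) 0) < \<psi> (\<lambda>\<omega>. 0) + 1) at_top"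
          using hyp by (intro order_tendstoD(2)) auto
        then show "eventually (\<lambda>z. dist (L (\<lambda>\<omega>. max (Z \<omega> - z) 0)) 0 < e) at_top"
        proof eventually_elim
          case (elim z)
          have PC: "(\<lambda>\<omega>. max (Z \<omega> - z) 0) \<in> C" unfolding C_def by (rule CZ_Zpart[OF Z_cont Z_ge1])
          have nPC: "(\<lambda>\<omega>. real n * max (Z \<omega> - z) 0) \<in> C" using CZ_scale[OF PC[unfolded C_def] Z_ge1] by (simp add: C_def)
          have "real n * L (\<lambda>\<omega>. max (Z \<omega> - z) 0) = L (\<lambda>\<omega>. real n * max (Z \<omega> - z) 0)"
            using L_scale[OF PC] by simp
          also have "\<dots> \<le> a + \<psi> (\<lambda>\<omega>. real n * max (Z \<omega> - z) 0)" using L_le[OF nPC] by simp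
          also have "\<dots> < e * real n" using elim ne by linarith
          finally have "L (\<lambda>\<omega>. max (Z \<omega> - z) 0) < e" using npos by (simp add: mult.commute)
          moreover have "0 \<le> L (\<lambda>\<omega>. max (Z \<omega> - z) 0)" using L_pos[OF PC] by simp
          ultimately show ?case by simp
        qed
      qed
      obtain \<mu> where \<mu>: "\<mu> \<in> caZ \<Omega> Z" "\<forall>X\<in>C. pairing X \<mu> = L X"
        using riesz[OF \<Omega>_ne Z_ge1 Z_cont Z_compact, of L] L_add L_scale L_pos L_tight
        unfolding C_def by blast
      have "conj_CZ \<Omega> Z \<psi> \<mu> \<le> ereal a"
        unfolding conj_CZ_def using \<mu>(2) L_le by (intro SUP_least) (auto simp: C_def)
      then have "\<mu> \<in> S" using \<mu>(1) by (simp add: S_def)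
      moreover have "F \<mu> = L"
        using Ltop \<mu>(2) by (auto simp: topT F_def PiE_def extensional_def fun_eq_iff)
      ultimately show "L \<in> F ` S" by blast
    qed
  qed
  have cFS: "compactin T (F ` S)" by (rule closed_compactin[OF cK FS_K closedFS])
  have wopen: "\<exists>V. openin T V \<and> W = {\<mu>\<in>caZ \<Omega> Z. F \<mu> \<in> V}" if "openin (weak_topology_caZ \<Omega> Z) W" for W
  proof -
    have "generate_topology_on {{\<mu> \<in> caZ \<Omega> Z. pairing X \<mu> \<in> U} | X U. X \<in> CZ \<Omega> Z \<and> open U} W"
      using that by (simp add: weak_topology_caZ_def openin_topology_generated_by_iff)
    then show ?thesis
    proof induction
      case Empty
      then show ?case by (intro exI[of _ "{}"]) auto
    next
      case (Int a b)
      then obtain Va Vb where "openin T Va" "a = {\<mu>\<in>caZ \<Omega> Z. F \<mu> \<in> Va}" "openin T Vb" "b = {\<mu>\<in>caZ \<Omega> Z. F \<mu> \<in> Vb}"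
        by blast
      then show ?case by (intro exI[of _ "Va \<inter> Vb"]) auto
    next
      case (UN K)
      then obtain V where V: "\<And>k. k \<in> K \<Longrightarrow> openin T (V k) \<and> k = {\<mu>\<in>caZ \<Omega> Z. F \<mu> \<in> V k}"
        by metis
      show ?case
        by (intro exI[of _ "\<Union>k\<in>K. V k"]) (use V in blast)
    next
      case (Basis s)
      then obtain X U where XU: "s = {\<mu> \<in> caZ \<Omega> Z. pairing X \<mu> \<in> U}" "X \<in> C" "open U"
        by (auto simp: C_def)
      show ?case
      proof (intro exI conjI)
        show "openin T {h \<in> topspace T. h X \<in> U}"
          using XU by (intro openin_continuous_map_preimage[OF proj]) auto
        show "s = {\<mu> \<in> caZ \<Omega> Z. F \<mu> \<in> {h \<in> topspace T. h X \<in> U}}"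
          using XU F_top by (auto simp: FX)
      qed
    qed
  qed
  have topw: "topspace (weak_topology_caZ \<Omega> Z) = caZ \<Omega> Z"
  proof -
    have "(\<lambda>_. 0) \<in> CZ \<Omega> Z" using Z_ge1 by (intro CZ_I[where c=0]) auto
    then show ?thesis unfolding weak_topology_caZ_def topology_generated_by_topspace
      by auto
  qed
  show ?thesis
    unfolding S_def[symmetric] compactin_def
  proof (intro conjI allI impI)
    show "S \<subseteq> topspace (weak_topology_caZ \<Omega> Z)" using SZ topw by simp
    fix U assume U: "(\<forall>W\<in>U. openin (weak_topology_caZ \<Omega> Z) W) \<and> S \<subseteq> \<Union> U"
    then obtain V where V: "\<And>W. W \<in> U \<Longrightarrow> openin T (V W) \<and> W = {\<mu>\<in>caZ \<Omega> Z. F \<mu> \<in> V W}"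
      using wopen by metis
    have "\<forall>Q\<in>V ` U. openin T Q" using V by auto
    moreover have "F ` S \<subseteq> \<Union> (V ` U)"
    proof
      fix h assume "h \<in> F ` S"
      then obtain \<mu> where "\<mu> \<in> S" "h = F \<mu>" by blast
      then obtain W where "W \<in> U" "\<mu> \<in> W" using U by blast
      then show "h \<in> \<Union> (V ` U)" using V \<open>h = F \<mu>\<close> by blast
    qed
    ultimately obtain G where G: "finite G" "G \<subseteq> V ` U" "F ` S \<subseteq> \<Union> G"
      using cFS unfolding compactin_def by meson
    then obtain U' where U': "U' \<subseteq> U" "finite U'" "G = V ` U'"
      by (meson finite_subset_image)
    have "S \<subseteq> \<Union> U'"
    proof
      fix \<mu> assume "\<mu> \<in> S"
      then obtain W where "W \<in> U'" "F \<mu> \<in> V W" using G U' by blast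
      then show "\<mu> \<in> \<Union> U'" using V[of W] U' SZ \<open>\<mu> \<in> S\<close> by blast
    qed
    then show "\<exists>F. finite F \<and> F \<subseteq> U \<and> S \<subseteq> \<Union> F" using U' by blast
  qed
qed


theorem lemmaA3:
  fixes \<Omega> :: "((real^'k::finite)^'t::finite) set"
    and k0 :: 'k
    and Z :: "(real^'k)^'t \<Rightarrow> real"
    and \<psi> :: "((real^'k)^'t \<Rightarrow> real) \<Rightarrow> real"
  assumes \<Omega>_sub: "\<Omega> \<subseteq> state_space k0"
    and \<Omega>_ne: "\<Omega> \<noteq> {}"
    and Z_ge1: "\<forall>\<omega>\<in>\<Omega>. 1 \<le> Z \<omega>"
    and Z_cont: "continuous_on \<Omega> Z"
    and Z_compact: "\<forall>z::real. 0 \<le> z \<longrightarrow> compact {\<omega>\<in>\<Omega>. Z \<omega> \<le> z}"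
    and \<psi>_incr: "increasing_on_CZ \<Omega> Z \<psi>"
    and \<psi>_conv: "convex_on_CZ \<Omega> Z \<psi>"
  shows "(\<exists>\<phi> :: real \<Rightarrow> ereal.
            (\<forall>x\<ge>0. \<phi> x \<noteq> -\<infinity>)
          \<and> mono_on {0..} \<phi>
          \<and> ereal_convex_on {0..} \<phi>
          \<and> ((\<lambda>x. \<phi> x / ereal x) \<longlongrightarrow> \<infinity>) at_top
          \<and> (\<forall>\<mu>\<in>caZ \<Omega> Z. conj_CZ \<Omega> Z \<psi> \<mu> \<ge> \<phi> (pairing Z \<mu>)))
       \<and> ((\<forall>n::nat. ((\<lambda>z::real. \<psi> (\<lambda>\<omega>. real n * max (Z \<omega> - z) 0)) \<longlongrightarrow> \<psi> (\<lambda>\<omega>. 0)) at_top)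
          \<longrightarrow> (\<forall>a::real. compactin (weak_topology_caZ \<Omega> Z)
                              {\<mu>\<in>caZ \<Omega> Z. conj_CZ \<Omega> Z \<psi> \<mu> \<le> ereal a}))"
proof
  show "\<exists>\<phi> :: real \<Rightarrow> ereal.
            (\<forall>x\<ge>0. \<phi> x \<noteq> -\<infinity>)
          \<and> mono_on {0..} \<phi>
          \<and> ereal_convex_on {0..} \<phi>
          \<and> ((\<lambda>x. \<phi> x / ereal x) \<longlongrightarrow> \<infinity>) at_top
          \<and> (\<forall>\<mu>\<in>caZ \<Omega> Z. conj_CZ \<Omega> Z \<psi> \<mu> \<ge> \<phi> (pairing Z \<mu>))"
    by (rule part1[OF Z_ge1 Z_cont])
  show "(\<forall>n::nat. ((\<lambda>z::real. \<psi> (\<lambda>\<omega>. real n * max (Z \<omega> - z) 0)) \<longlongrightarrow> \<psi> (\<lambda>\<omega>. 0)) at_top)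
          \<longrightarrow> (\<forall>a::real. compactin (weak_topology_caZ \<Omega> Z)
                              {\<mu>\<in>caZ \<Omega> Z. conj_CZ \<Omega> Z \<psi> \<mu> \<le> ereal a})"
    using part2[OF \<Omega>_ne Z_ge1 Z_cont Z_compact] by blast
qed

end
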